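(* Let $\mathbb{F}$ be a field, $0\neq h\in\mathbb{F}[x]$, and $A=A_h$ the unital $\mathbb{F}$-algebra generated by $x,\hat y$ with $\hat yx-x\hat y=h$. With the complex and maps defined in the context, the right $A$-module maps $s_{-1},s_0,s_1$ form a contracting homotopy, i.e. $\mu\circ s_{-1}=1_A$, $s_{-1}\circ\mu+d_0\circ s_0=1_{A\otimes A}$, $s_0\circ d_0+d_1\circ s_1=1_{A\otimes V\otimes A}$, and $s_1\circ d_1=1_{A\otimes R\otimes A}$.
   Context: $A$ has $\mathbb{F}$-basis $\{x^i\hat y^\ell\}$ and $\hat y f=f\hat y+\delta(f)$ for $f\in\mathbb{F}[x]$, where $\delta(f)=f'h$. Let $V=\mathbb{F}x\oplus\mathbb{F}\hat y\subseteq A$, $R=\mathbb{F}r$ one-dimensional, and all tensor products over $\mathbb{F}$. The complex of $A$-bimodules is $0\to A\otimes R\otimes A\xrightarrow{d_1}A\otimes V\otimes A\xrightarrow{d_0}A\otimes A\xrightarrow{\mu}A\to0$ with $\mu$ multiplication, $d_0(1\otimes v\otimes1)=v\otimes1-1\otimes v$, $d_1(1\otimes r\otimes1)=1\otimes\hat y\otimes x+\hat y\otimes x\otimes1-1\otimes x\otimes\hat y-x\otimes\hat y\otimes1-s_0(h\otimes1)$. Right $A$-module maps: $s_{-1}:A\to A\otimes A$, $s_{-1}(1)=1\otimes1$; $s_0:A\otimes A\to A\otimes V\otimes A$, $s_0(x^k\hat y^\ell\otimes1)=\sum_{i=0}^{k-1}x^i\otimes x\otimes x^{k-1-i}\hat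 y^\ell+\sum_{j=0}^{\ell-1}x^k\hat y^j\otimes\hat y\otimes\hat y^{\ell-1-j}$. $G:\mathbb{F}[x]\to A\otimes R\otimes A$ is linear with $G(x^k)=\sum_{i=0}^{k-1}x^i\otimes r\otimes x^{k-1-i}$. $s_1:A\otimes V\otimes A\to A\otimes R\otimes A$ is the right $A$-module map defined, for $f\in\mathbb{F}[x]$, $a,b\in A$, $\ell\geq0$, by: $s_1(a\otimes\hat y\otimes b)=0$; $s_1(f\hat y^\ell\otimes x\otimes a)=f\,s_1(\hat y^\ell\otimes x\otimes1)a$; $s_1(1\otimes x\otimes1)=0$; $s_1(\hat y^{\ell+1}\otimes x\otimes1)=\hat y\,s_1(\hat y^\ell\otimes x\otimes1)+\sum_{j=0}^\ell\binom{\ell}{j}G(\delta^j(x))\hat y^{\ell-j}$. *)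

theory Defs
  imports "HOL-Computational_Algebra.Polynomial" "HOL-Library.Poly_Mapping"
begin

text \<open>An element of A is a finitely supported
  coefficient function on the F-basis x^i yhat^l, indexed by (i,l).
  Tensor products over F of A, a finite-dimensional space with basis 'g, and A
  are finitely supported functions on triples ((i,l), g, (k,m)), the basis
  (x^i yhat^l) (x) g (x) (x^k yhat^m).\<close>

type_synonym 'a alg = "(nat \<times> nat) \<Rightarrow>\<^sub>0 'a"
type_synonym ('a, 'g) tens = "((nat \<times> nat) \<times> 'g \<times> (nat \<times> nat)) \<Rightarrow>\<^sub>0 'a"

text \<open>Basis of V = F x + F yhat, and of R = F r.\<close>
datatype vgen = Vx | Vy
datatype rgen = Rr

definition smul :: "'a::semiring_0 \<Rightarrow> ('k \<Rightarrow>\<^sub>0 'a) \<Rightarrow> ('k \<Rightarrow>\<^sub>0 'a)" where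
  "smul c p = Poly_Mapping.map (\<lambda>v. c * v) p"

definition lin :: "('k \<Rightarrow> ('j \<Rightarrow>\<^sub>0 'a::semiring_0)) \<Rightarrow> ('k \<Rightarrow>\<^sub>0 'a) \<Rightarrow> ('j \<Rightarrow>\<^sub>0 'a)" where
  "lin \<phi> p = (\<Sum>k\<in>Poly_Mapping.keys p. smul (Poly_Mapping.lookup p k) (\<phi> k))"

definition E :: "nat \<Rightarrow> nat \<Rightarrow> 'a::semiring_1 alg" where
  "E i l = Poly_Mapping.single (i, l) 1"

definition Eb :: "nat \<times> nat \<Rightarrow> 'a::semiring_1 alg" where
  "Eb u = E (fst u) (snd u)"

definition polyA :: "'a::comm_semiring_1 poly \<Rightarrow> 'a alg" where
  "polyA f = (\<Sum>n\<le>degree f. smul (coeff f n) (E n 0))"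

definition delta :: "'a::idom poly \<Rightarrow> 'a poly \<Rightarrow> 'a poly" where
  "delta h f = pderiv f * h"

text \<open>Product of basis elements:
  (x^i yhat^a)(x^k yhat^b) = sum_j binom(a,j) x^i delta^j(x^k) yhat^(a-j+b),
  which is the unique product determined by the basis and yhat f = f yhat + delta(f).\<close>
definition bmul :: "'a::idom poly \<Rightarrow> nat \<times> nat \<Rightarrow> nat \<times> nat \<Rightarrow> 'a alg" where
  "bmul h u v = (case u of (i, a) \<Rightarrow> case v of (k, b) \<Rightarrow>
     (\<Sum>j\<le>a. let g = (delta h ^^ j) (monom 1 k) in
        (\<Sum>n\<le>degree g. smul (of_nat (a choose j) * coeff g n) (E (i + n) (a - j + b)))))"

definition amul :: "'a::idom poly \<Rightarrow> 'a alg \<Rightarrow> 'a alg \<Rightarrow> 'a alg" where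
  "amul h p q = lin (\<lambda>u. lin (\<lambda>v. bmul h u v) q) p"

definition tens3 :: "'a::semiring_1 alg \<Rightarrow> 'g \<Rightarrow> 'a alg \<Rightarrow> ('a, 'g) tens" where
  "tens3 a g b = lin (\<lambda>u. lin (\<lambda>w. Poly_Mapping.single (u, g, w) 1) b) a"

definition lact :: "'a::idom poly \<Rightarrow> 'a alg \<Rightarrow> ('a, 'g) tens \<Rightarrow> ('a, 'g) tens" where
  "lact h a t = lin (\<lambda>(u, g, w). tens3 (amul h a (Eb u)) g (Eb w)) t"

definition ract :: "'a::idom poly \<Rightarrow> ('a, 'g) tens \<Rightarrow> 'a alg \<Rightarrow> ('a, 'g) tens" where
  "ract h t b = lin (\<lambda>(u, g, w). tens3 (Eb u) g (amul h (Eb w) b)) t"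

definition vel :: "vgen \<Rightarrow> 'a::semiring_1 alg" where
  "vel v = (case v of Vx \<Rightarrow> E 1 0 | Vy \<Rightarrow> E 0 1)"

definition mu :: "'a::idom poly \<Rightarrow> ('a, unit) tens \<Rightarrow> 'a alg" where
  "mu h t = lin (\<lambda>(u, _, w). amul h (Eb u) (Eb w)) t"

definition d0 :: "'a::idom poly \<Rightarrow> ('a, vgen) tens \<Rightarrow> ('a, unit) tens" where
  "d0 h t = lin (\<lambda>(u, v, w). tens3 (amul h (Eb u) (vel v)) () (Eb w)
                          - tens3 (Eb u) () (amul h (vel v) (Eb w))) t"

definition sm1 :: "'a::idom alg \<Rightarrow> ('a, unit) tens" where
  "sm1 a = tens3 (E 0 0) () a"

definition s0gen :: "nat \<Rightarrow> nat \<Rightarrow> ('a::idom, vgen) tens" where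
  "s0gen k l = (\<Sum>i<k. tens3 (E i 0) Vx (E (k - 1 - i) l))
             + (\<Sum>j<l. tens3 (E k j) Vy (E 0 (l - 1 - j)))"

definition s0 :: "'a::idom poly \<Rightarrow> ('a, unit) tens \<Rightarrow> ('a, vgen) tens" where
  "s0 h t = lin (\<lambda>(u, _, w). ract h (s0gen (fst u) (snd u)) (Eb w)) t"

definition d1gen :: "'a::idom poly \<Rightarrow> ('a, vgen) tens" where
  "d1gen h = tens3 (E 0 0) Vy (E 1 0) + tens3 (E 0 1) Vx (E 0 0)
           - tens3 (E 0 0) Vx (E 0 1) - tens3 (E 1 0) Vy (E 0 0)
           - s0 h (tens3 (polyA h) () (E 0 0))"

definition d1 :: "'a::idom poly \<Rightarrow> ('a, rgen) tens \<Rightarrow> ('a, vgen) tens" where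
  "d1 h t = lin (\<lambda>(u, _, w). lact h (Eb u) (ract h (d1gen h) (Eb w))) t"

definition Gmap :: "'a::idom poly \<Rightarrow> ('a, rgen) tens" where
  "Gmap f = (\<Sum>k\<le>degree f. smul (coeff f k) (\<Sum>i<k. tens3 (E i 0) Rr (E (k - 1 - i) 0)))"

text \<open>s_1(yhat^l (x) x (x) 1), defined recursively\<close>
primrec s1gen :: "'a::idom poly \<Rightarrow> nat \<Rightarrow> ('a, rgen) tens" where
  "s1gen h 0 = 0"
| "s1gen h (Suc l) = lact h (E 0 1) (s1gen h l)
     + (\<Sum>j\<le>l. smul (of_nat (l choose j)) (ract h (Gmap ((delta h ^^ j) [:0, 1:])) (E 0 (l - j))))"

definition s1 :: "'a::idom poly \<Rightarrow> ('a, vgen) tens \<Rightarrow> ('a, rgen) tens" where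
  "s1 h t = lin (\<lambda>(u, v, w). case v of
       Vy \<Rightarrow> 0
     | Vx \<Rightarrow> lact h (E (fst u) 0) (ract h (s1gen h (snd u)) (Eb w))) t"

end

theory Submission
  imports Defs
begin

lemma lookup_smul[simp]: "Poly_Mapping.lookup (smul c p) k = c * Poly_Mapping.lookup p k"
  by (simp add: smul_def Poly_Mapping.map.rep_eq when_def)

lemma smul_add2: "smul c (p + q) = smul c p + smul c (q::'k \<Rightarrow>\<^sub>0 'a::comm_ring_1)"
  by (rule poly_mapping_eqI) (simp add: lookup_add algebra_simps)
lemma smul_add1: "smul (c + d) p = smul c p + smul d (p::'k \<Rightarrow>\<^sub>0 'a::comm_ring_1)"
  by (rule poly_mapping_eqI) (simp add: lookup_add algebra_simps)
lemma smul_smul[simp]: "smul c (smul d p) = smul (c * d) (p::'k \<Rightarrow>\<^sub>0 'a::comm_ring_1)"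
  by (rule poly_mapping_eqI) (simp add: algebra_simps)
lemma smul_one[simp]: "smul 1 p = (p::'k \<Rightarrow>\<^sub>0 'a::comm_ring_1)"
  by (rule poly_mapping_eqI) simp
lemma smul_zero1[simp]: "smul 0 p = (0::'k \<Rightarrow>\<^sub>0 'a::comm_ring_1)"
  by (rule poly_mapping_eqI) simp
lemma smul_zero2[simp]: "smul c 0 = (0::'k \<Rightarrow>\<^sub>0 'a::comm_ring_1)"
  by (rule poly_mapping_eqI) simp
lemma smul_diff2: "smul c (p - q) = smul c p - smul c (q::'k \<Rightarrow>\<^sub>0 'a::comm_ring_1)"
  by (rule poly_mapping_eqI) (simp add: lookup_minus algebra_simps)
lemma smul_diff1: "smul (c - d) p = smul c p - smul d (p::'k \<Rightarrow>\<^sub>0 'a::comm_ring_1)"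
  by (rule poly_mapping_eqI) (simp add: lookup_minus algebra_simps)
lemma smul_uminus2: "smul c (- p) = - smul c (p::'k \<Rightarrow>\<^sub>0 'a::comm_ring_1)"
  by (rule poly_mapping_eqI) (simp add: algebra_simps)
lemma smul_sum2: "smul c (\<Sum>i\<in>I. f i) = (\<Sum>i\<in>I. smul c (f i::'k \<Rightarrow>\<^sub>0 'a::comm_ring_1))"
  by (induction I rule: infinite_finite_induct) (simp_all add: smul_add2)
lemma smul_sum1: "smul (\<Sum>i\<in>I. f i) p = (\<Sum>i\<in>I. smul (f i) (p::'k \<Rightarrow>\<^sub>0 'a::comm_ring_1))"
  by (induction I rule: infinite_finite_induct) (simp_all add: smul_add1)
lemma smul_single: "smul c (Poly_Mapping.single k d) = Poly_Mapping.single k (c * (d::'a::comm_ring_1))"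
  by (rule poly_mapping_eqI) (simp add: lookup_single when_def)

lemma lin_eq:
  assumes "finite S" "Poly_Mapping.keys p \<subseteq> S"
  shows "lin \<phi> p = (\<Sum>k\<in>S. smul (Poly_Mapping.lookup p k) (\<phi> k :: 'j \<Rightarrow>\<^sub>0 'a::comm_ring_1))"
  unfolding lin_def
  by (rule sum.mono_neutral_left) (use assms in \<open>auto simp: in_keys_iff\<close>)

lemma lin_add: "lin \<phi> (p + q) = lin \<phi> p + lin \<phi> (q :: 'k \<Rightarrow>\<^sub>0 'a::comm_ring_1)"
proof -
  let ?S = "Poly_Mapping.keys p \<union> Poly_Mapping.keys q"
  have "Poly_Mapping.keys (p+q) \<subseteq> ?S" by (rule keys_add)
  then show ?thesis
    by (simp add: lin_eq[of ?S] lookup_add smul_add1 sum.distrib)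
qed

lemma lin_smul: "lin \<phi> (smul c p) = smul c (lin \<phi> (p :: 'k \<Rightarrow>\<^sub>0 'a::comm_ring_1))"
proof -
  have "Poly_Mapping.keys (smul c p) \<subseteq> Poly_Mapping.keys p" by (auto simp: in_keys_iff)
  then show ?thesis
    by (simp add: lin_eq[of "Poly_Mapping.keys p"] smul_sum2 mult.commute)
qed

lemma lin_zero[simp]: "lin \<phi> 0 = (0 :: 'j \<Rightarrow>\<^sub>0 'a::comm_ring_1)"
  by (simp add: lin_def)

lemma lin_single[simp]: "lin \<phi> (Poly_Mapping.single k c) = smul c (\<phi> k :: 'j \<Rightarrow>\<^sub>0 'a::comm_ring_1)"
  by (simp add: lin_eq[of "{k}"])

lemma lin_uminus: "lin \<phi> (- p) = - lin \<phi> (p :: 'k \<Rightarrow>\<^sub>0 'a::comm_ring_1)"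
proof -
  have "lin \<phi> (- p) + lin \<phi> p = 0" using lin_add[of \<phi> "-p" p] by simp
  then show ?thesis by (simp add: eq_neg_iff_add_eq_0)
qed

lemma lin_diff: "lin \<phi> (p - q) = lin \<phi> p - lin \<phi> (q :: 'k \<Rightarrow>\<^sub>0 'a::comm_ring_1)"
  using lin_add[of \<phi> p "-q"] lin_uminus[of \<phi> q] by simp

lemma lin_sum: "lin \<phi> (\<Sum>i\<in>I. f i) = (\<Sum>i\<in>I. lin \<phi> (f i :: 'k \<Rightarrow>\<^sub>0 'a::comm_ring_1))"
  by (induction I rule: infinite_finite_induct) (simp_all add: lin_add)

lemma lin_cong: "(\<And>k. k \<in> Poly_Mapping.keys p \<Longrightarrow> \<phi> k = \<psi> k) \<Longrightarrow> lin \<phi> p = lin \<psi> p"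
  by (simp add: lin_def)

lemma lin_fadd: "lin (\<lambda>k. \<phi> k + \<psi> k) p = lin \<phi> p + lin \<psi> (p :: 'k \<Rightarrow>\<^sub>0 'a::comm_ring_1)"
  by (simp add: lin_def smul_add2 sum.distrib)
lemma lin_fdiff: "lin (\<lambda>k. \<phi> k - \<psi> k) p = lin \<phi> p - lin \<psi> (p :: 'k \<Rightarrow>\<^sub>0 'a::comm_ring_1)"
  by (simp add: lin_def smul_diff2 sum_subtractf)
lemma lin_fzero[simp]: "lin (\<lambda>k. 0) p = (0 :: 'j \<Rightarrow>\<^sub>0 'a::comm_ring_1)"
  by (simp add: lin_def)
lemma lin_fsmul: "lin (\<lambda>k. smul c (\<phi> k)) p = smul c (lin \<phi> (p :: 'k \<Rightarrow>\<^sub>0 'a::comm_ring_1))"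
  by (simp add: lin_def smul_sum2 mult.commute)
lemma lin_fsum: "lin (\<lambda>k. \<Sum>i\<in>I. \<phi> i k) p = (\<Sum>i\<in>I. lin (\<phi> i) (p :: 'k \<Rightarrow>\<^sub>0 'a::comm_ring_1))"
  by (induction I rule: infinite_finite_induct) (simp_all add: lin_fadd)

lemma lin_expand: "lin (\<lambda>k. Poly_Mapping.single k 1) p = (p :: 'k \<Rightarrow>\<^sub>0 'a::comm_ring_1)"
proof -
  have *: "finite I \<Longrightarrow> Poly_Mapping.lookup (\<Sum>i\<in>I. smul (Poly_Mapping.lookup p i) (Poly_Mapping.single i 1)) j =
            (if j \<in> I then Poly_Mapping.lookup p j else 0)" for I j
    by (induction I rule: finite_induct) (auto simp: lookup_single lookup_add when_def)
  show ?thesis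
    unfolding lin_def
    by (rule poly_mapping_eqI) (fastforce simp add: in_keys_iff *)
qed

definition lmap :: "(('k \<Rightarrow>\<^sub>0 'a::comm_ring_1) \<Rightarrow> ('j \<Rightarrow>\<^sub>0 'a)) \<Rightarrow> bool" where
  "lmap L \<longleftrightarrow> (\<forall>p q. L (p + q) = L p + L q) \<and> (\<forall>c p. L (smul c p) = smul c (L p))"

lemma lmapI: "(\<And>p q. L (p + q) = L p + L q) \<Longrightarrow> (\<And>c p. L (smul c p) = smul c (L p)) \<Longrightarrow> lmap L"
  by (simp add: lmap_def)

lemma lmap_add: "lmap L \<Longrightarrow> L (p + q) = L p + L q" by (simp add: lmap_def)
lemma lmap_smul: "lmap L \<Longrightarrow> L (smul c p) = smul c (L p)" by (simp add: lmap_def)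
lemma lmap_zero: "lmap L \<Longrightarrow> L 0 = 0"
  using lmap_smul[of L 0 0] by simp
lemma lmap_uminus: "lmap L \<Longrightarrow> L (- p) = - L p"
proof -
  assume a: "lmap L"
  have "L (- p) + L p = 0" using lmap_add[OF a, of "-p" p] lmap_zero[OF a] by simp
  then show ?thesis by (simp add: eq_neg_iff_add_eq_0)
qed
lemma lmap_diff: "lmap L \<Longrightarrow> L (p - q) = L p - L q"
  using lmap_add[of L p "-q"] lmap_uminus[of L q] by simp
lemma lmap_sum: "lmap L \<Longrightarrow> L (\<Sum>i\<in>I. f i) = (\<Sum>i\<in>I. L (f i))"
  by (induction I rule: infinite_finite_induct) (simp_all add: lmap_add lmap_zero)

lemma lmap_lin: "lmap (lin \<phi>)"
  by (simp add: lmapI lin_add lin_smul)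
lemma lmap_id: "lmap (\<lambda>p. p)" by (simp add: lmap_def)
lemma lmap_comp: "lmap L \<Longrightarrow> lmap M \<Longrightarrow> lmap (\<lambda>p. L (M p))"
  by (simp add: lmap_def)
lemma lmap_plus: "lmap L \<Longrightarrow> lmap M \<Longrightarrow> lmap (\<lambda>p. L p + M p)"
  by (simp add: lmap_def smul_add2)
lemma lmap_minus: "lmap L \<Longrightarrow> lmap M \<Longrightarrow> lmap (\<lambda>p. L p - M p)"
  by (simp add: lmap_def smul_diff2)
lemma lmap_const0: "lmap (\<lambda>p. 0)"
  by (simp add: lmap_def)
lemma lmap_smulc: "lmap (\<lambda>p. smul c p)"
  by (simp add: lmap_def smul_add2 mult.commute)

lemma lmap_expand: assumes "lmap L" shows "L p = lin (\<lambda>k. L (Poly_Mapping.single k 1)) p"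
proof -
  have "L p = L (lin (\<lambda>k. Poly_Mapping.single k 1) p)" by (simp add: lin_expand)
  also have "\<dots> = lin (\<lambda>k. L (Poly_Mapping.single k 1)) p"
    unfolding lin_def using assms by (simp add: lmap_sum lmap_smul)
  finally show ?thesis .
qed

lemma lmap_eqI: assumes "lmap L" "lmap M" "\<And>k. L (Poly_Mapping.single k 1) = M (Poly_Mapping.single k 1)"
  shows "L p = M p"
proof -
  have "L p = lin (\<lambda>k. L (Poly_Mapping.single k 1)) p" by (rule lmap_expand[OF assms(1)])
  also have "\<dots> = lin (\<lambda>k. M (Poly_Mapping.single k 1)) p" using assms(3) by simp
  also have "\<dots> = M p" by (rule lmap_expand[OF assms(2), symmetric])
  finally show ?thesis .
qed

lemma lin_lin: "lin \<phi> (lin \<psi> p) = lin (\<lambda>k. lin \<phi> (\<psi> k)) (p :: 'k \<Rightarrow>\<^sub>0 'a::comm_ring_1)"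
  by (simp add: lin_def[of \<psi>] lin_sum lin_smul) (simp add: lin_def)



definition pext :: "(nat \<Rightarrow> ('k \<Rightarrow>\<^sub>0 'a::comm_ring_1)) \<Rightarrow> 'a poly \<Rightarrow> ('k \<Rightarrow>\<^sub>0 'a)" where
  "pext F f = (\<Sum>n\<le>degree f. smul (coeff f n) (F n))"

lemma pext_eq: "degree f \<le> N \<Longrightarrow> pext F f = (\<Sum>n\<le>N. smul (coeff f n) (F n))"
  unfolding pext_def
  by (rule sum.mono_neutral_left) (auto simp: coeff_eq_0)

lemma pext_add: "pext F (f + g) = pext F f + pext F g"
proof -
  let ?N = "max (degree f) (degree g)"
  have "degree (f + g) \<le> ?N" by (rule degree_add_le_max)
  then show ?thesis
    by (simp add: pext_eq[of _ ?N] smul_add1 sum.distrib)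
qed

lemma pext_smult: "pext F (smult c f) = smul c (pext F f)"
proof -
  have "pext F (smult c f) = (\<Sum>n\<le>degree f. smul (coeff (smult c f) n) (F n))"
    by (rule pext_eq) (rule degree_smult_le)
  then show ?thesis
    by (simp add: smul_sum2 pext_def)
qed

lemma pext_monom: "pext F (monom c n) = smul c (F n)"
proof -
  have "pext F (monom c n) = (\<Sum>m\<le>n. smul (coeff (monom c n) m) (F m))"
    by (rule pext_eq) (rule degree_monom_le)
  also have "\<dots> = (\<Sum>m\<le>n. if m = n then smul c (F n) else 0)"
    by (rule sum.cong) auto
  also have "\<dots> = smul c (F n)" by simp
  finally show ?thesis .
qed

lemma pext_zero[simp]: "pext F 0 = 0"
  by (simp add: pext_def)

lemma pext_lmap: "lmap L \<Longrightarrow> L (pext F f) = pext (\<lambda>n. L (F n)) f"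
  by (simp add: pext_def lmap_sum lmap_smul)

lemma pext_fadd: "pext (\<lambda>n. F n + G n) f = pext F f + pext G f"
  by (simp add: pext_def smul_add2 sum.distrib)

definition plin :: "('a::comm_ring_1 poly \<Rightarrow> ('k \<Rightarrow>\<^sub>0 'a)) \<Rightarrow> bool" where
  "plin P \<longleftrightarrow> (\<forall>f g. P (f + g) = P f + P g) \<and> (\<forall>c f. P (smult c f) = smul c (P f))"

lemma plinI: "(\<And>f g. P (f + g) = P f + P g) \<Longrightarrow> (\<And>c f. P (smult c f) = smul c (P f)) \<Longrightarrow> plin P"
  by (simp add: plin_def)
lemma plin_add: "plin P \<Longrightarrow> P (f + g) = P f + P g" by (simp add: plin_def)
lemma plin_smult: "plin P \<Longrightarrow> P (smult c f) = smul c (P f)" by (simp add: plin_def)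
lemma plin_zero: "plin P \<Longrightarrow> P 0 = 0"
  using plin_smult[of P 0 0] by simp
lemma plin_sum: "plin P \<Longrightarrow> P (\<Sum>i\<in>I. f i) = (\<Sum>i\<in>I. P (f i))"
  by (induction I rule: infinite_finite_induct) (simp_all add: plin_add plin_zero)

lemma plin_expand: assumes "plin P" shows "P f = pext (\<lambda>n. P (monom 1 n)) f"
proof -
  have "P f = P (\<Sum>i\<le>degree f. monom (coeff f i) i)" by (simp add: poly_as_sum_of_monoms)
  also have "\<dots> = (\<Sum>i\<le>degree f. P (smult (coeff f i) (monom 1 i)))"
    using assms by (simp add: plin_sum smult_monom)
  also have "\<dots> = pext (\<lambda>n. P (monom 1 n)) f"
    using assms by (simp add: plin_smult pext_def)
  finally show ?thesis .
qed

lemma plin_eqI: assumes "plin P" "plin Q" "\<And>n. P (monom 1 n) = Q (monom 1 n)"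
  shows "P f = Q f"
proof -
  have "P f = pext (\<lambda>n. P (monom 1 n)) f" by (rule plin_expand[OF assms(1)])
  also have "\<dots> = pext (\<lambda>n. Q (monom 1 n)) f" using assms(3) by simp
  also have "\<dots> = Q f" by (rule plin_expand[OF assms(2), symmetric])
  finally show ?thesis .
qed

lemma plin_pext: "plin (pext F)"
  by (simp add: plinI pext_add pext_smult)
lemma plin_lmap: "lmap L \<Longrightarrow> plin P \<Longrightarrow> plin (\<lambda>f. L (P f))"
  by (simp add: plin_def lmap_add lmap_smul)
lemma plin_mult: "plin P \<Longrightarrow> plin (\<lambda>f. P (g * f))"
  by (simp add: plin_def distrib_left)
lemma plin_mult2: "plin P \<Longrightarrow> plin (\<lambda>f. P (f * g))"
  by (simp add: plin_def distrib_right)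
lemma plin_plus: "plin P \<Longrightarrow> plin Q \<Longrightarrow> plin (\<lambda>f. P f + Q f)"
  by (simp add: plin_def smul_add2)
lemma plin_diff: "plin P \<Longrightarrow> plin Q \<Longrightarrow> plin (\<lambda>f. P f - Q f)"
  by (simp add: plin_def smul_diff2)

lemma delta_add: "delta h (f + g) = delta h f + delta h g"
  by (simp add: delta_def pderiv_add distrib_right)
lemma delta_smult: "delta h (smult c f) = smult c (delta h f)"
  by (simp add: delta_def pderiv_smult)
lemma plin_delta: "plin P \<Longrightarrow> plin (\<lambda>f. P (delta h f))"
  by (simp add: plin_def delta_add delta_smult)
lemma delta_mult: "delta h (f * g) = f * delta h g + g * delta h f"
  by (simp add: delta_def pderiv_mult algebra_simps)
lemma delta_1[simp]: "delta h 1 = 0"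
  by (simp add: delta_def)
lemma delta_one[simp]: "delta h (monom 1 0) = 0"
  by (simp add: delta_def monom_0 one_pCons[symmetric])



lemma Eb_single: "Eb u = Poly_Mapping.single u 1"
  by (simp add: Eb_def E_def)
lemma single_E: "Poly_Mapping.single (i, a) 1 = E i a"
  by (simp add: E_def)

lemma pext_fsmul: "pext (\<lambda>n. smul c (F n)) f = smul c (pext F f)"
  by (simp add: pext_def smul_sum2 mult.commute)

definition Lx :: "'a::field alg \<Rightarrow> 'a alg" where
  "Lx = lin (\<lambda>u. E (Suc (fst u)) (snd u))"

definition pyA :: "'a::field poly \<Rightarrow> nat \<Rightarrow> 'a alg" where
  "pyA f m = pext (\<lambda>n. E n m) f"

definition Ly :: "'a::field poly \<Rightarrow> 'a alg \<Rightarrow> 'a alg" where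
  "Ly h = lin (\<lambda>u. E (fst u) (Suc (snd u)) + pyA (delta h (monom 1 (fst u))) (snd u))"

definition Mp :: "'a::field poly \<Rightarrow> 'a alg \<Rightarrow> 'a alg" where
  "Mp f s = pext (\<lambda>n. (Lx ^^ n) s) f"

context fixes h :: "'a::field poly" begin

lemma lmap_Lx: "lmap Lx" by (simp add: Lx_def lmap_lin)
lemma lmap_Ly: "lmap (Ly h)" by (simp add: Ly_def lmap_lin)
lemma lmap_pow: fixes L :: "('k \<Rightarrow>\<^sub>0 'c::comm_ring_1) \<Rightarrow> ('k \<Rightarrow>\<^sub>0 'c)"
  assumes "lmap L" shows "lmap (L ^^ n)"
proof (induction n)
  case 0
  have "L ^^ 0 = (\<lambda>p. p)" by (simp add: fun_eq_iff)
  then show ?case using lmap_id by metis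
next
  case (Suc n) then show ?case using assms by (simp add: lmap_def)
qed
lemma lmap_Lxpow: "lmap (Lx ^^ n)" by (simp add: lmap_pow lmap_Lx)
lemma lmap_Lypow: "lmap (Ly h ^^ n)" by (simp add: lmap_pow lmap_Ly)

lemma Lx_E[simp]: "Lx (E i a) = E (Suc i) a"
  by (simp add: Lx_def E_def)
lemma Lxpow_E[simp]: "(Lx ^^ n) (E i a) = E (n + i) a"
  by (induction n) simp_all

lemma plin_pyA: "plin (\<lambda>f. pyA f m)"
  by (simp add: pyA_def plin_pext)
lemma pyA_monom: "pyA (monom c n) m = smul c (E n m)"
  by (simp add: pyA_def pext_monom)
lemma pyA_monom1[simp]: "pyA (monom 1 n) m = E n m"
  by (simp add: pyA_monom)
lemma pyA_add: "pyA (f + g) m = pyA f m + pyA g m"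
  by (simp add: pyA_def pext_add)
lemma pyA_smult: "pyA (smult c f) m = smul c (pyA f m)"
  by (simp add: pyA_def pext_smult)
lemma pyA_zero[simp]: "pyA 0 m = 0"
  by (simp add: pyA_def)

lemma Lxpow_pyA: "(Lx ^^ n) (pyA f m) = pyA (monom 1 n * f) m"
proof (rule plin_eqI[where f = f])
  show "plin (\<lambda>f. (Lx ^^ n) (pyA f m))" by (rule plin_lmap[OF lmap_Lxpow plin_pyA])
  show "plin (\<lambda>f. pyA (monom 1 n * f) m)" by (rule plin_mult[OF plin_pyA])
qed (simp add: mult_monom)

lemma Ly_E: "Ly h (E k m) = E k (Suc m) + pyA (delta h (monom 1 k)) m"
  by (simp add: Ly_def E_def)

lemma Ly_pyA: "Ly h (pyA f m) = pyA f (Suc m) + pyA (delta h f) m"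
proof (rule plin_eqI[where f = f])
  show "plin (\<lambda>f. Ly h (pyA f m))" by (rule plin_lmap[OF lmap_Ly plin_pyA])
  show "plin (\<lambda>f. pyA f (Suc m) + pyA (delta h f) m)"
    by (rule plin_plus[OF plin_pyA plin_delta[OF plin_pyA]])
qed (simp add: Ly_E)

lemma Lypow_E: "(Ly h ^^ a) (E k b) =
   (\<Sum>j\<le>a. smul (of_nat (a choose j)) (pyA ((delta h ^^ j) (monom 1 k)) (a - j + b)))"
proof (induction a)
  case 0
  then show ?case by simp
next
  case (Suc a)
  define g where "g j = (delta h ^^ j) (monom 1 k)" for j
  define Y where "Y j = pyA (g j) (Suc a - j + b)" for j
  have gS: "g (Suc j) = delta h (g j)" for j by (simp add: g_def)
  have "(Ly h ^^ Suc a) (E k b) = Ly h ((Ly h ^^ a) (E k b))" by simp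
  also have "\<dots> = (\<Sum>j\<le>a. smul (of_nat (a choose j)) (pyA (g j) (Suc (a - j + b)) + pyA (g (Suc j)) (a - j + b)))"
    unfolding Suc.IH by (simp add: lmap_sum[OF lmap_Ly] lmap_smul[OF lmap_Ly] Ly_pyA gS g_def)
  also have "\<dots> = (\<Sum>j\<le>a. smul (of_nat (a choose j)) (Y j)) + (\<Sum>j\<le>a. smul (of_nat (a choose j)) (Y (Suc j)))"
    unfolding Y_def by (simp add: smul_add2 sum.distrib Suc_diff_le)
  also have "(\<Sum>j\<le>a. smul (of_nat (a choose j)) (Y j)) = Y 0 + (\<Sum>j\<le>a. smul (of_nat (a choose Suc j)) (Y (Suc j)))"
  proof -
    have "(\<Sum>j\<le>Suc a. smul (of_nat (a choose j)) (Y j)) = (\<Sum>j\<le>a. smul (of_nat (a choose j)) (Y j))"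
      by (simp add: binomial_eq_0)
    moreover have "(\<Sum>j\<le>Suc a. smul (of_nat (a choose j)) (Y j)) = Y 0 + (\<Sum>j\<le>a. smul (of_nat (a choose Suc j)) (Y (Suc j)))"
      by (subst sum.atMost_Suc_shift) simp
    ultimately show ?thesis by simp
  qed
  also have "Y 0 + (\<Sum>j\<le>a. smul (of_nat (a choose Suc j)) (Y (Suc j))) + (\<Sum>j\<le>a. smul (of_nat (a choose j)) (Y (Suc j)))
      = (\<Sum>j\<le>Suc a. smul (of_nat (Suc a choose j)) (Y j))"
  proof -
    have "(\<Sum>j\<le>Suc a. smul (of_nat (Suc a choose j)) (Y j)) = Y 0 + (\<Sum>j\<le>a. smul (of_nat (Suc a choose Suc j)) (Y (Suc j)))"
      by (subst sum.atMost_Suc_shift) simp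
    also have "\<dots> = Y 0 + (\<Sum>j\<le>a. smul (of_nat (a choose Suc j)) (Y (Suc j))) + (\<Sum>j\<le>a. smul (of_nat (a choose j)) (Y (Suc j)))"
      by (simp add: smul_add1 sum.distrib add_ac)
    finally show ?thesis by simp
  qed
  finally show ?case by (simp add: Y_def g_def)
qed

lemma Lxpow_pyA': "(Lx ^^ i) (pyA g m) = (\<Sum>n\<le>degree g. smul (coeff g n) (E (i+n) m))"
  unfolding pyA_def pext_lmap[OF lmap_Lxpow] by (simp add: pext_def)

lemma bmul_lin: "lin (\<lambda>v. bmul h (i, a) v) q = (Lx ^^ i) ((Ly h ^^ a) q)"
proof -
  have b: "bmul h (i, a) (k, b) = (Lx ^^ i) ((Ly h ^^ a) (E k b))" for k b
  proof -
    have "(Lx ^^ i) ((Ly h ^^ a) (E k b)) =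
      (\<Sum>j\<le>a. smul (of_nat (a choose j)) ((Lx ^^ i) (pyA ((delta h ^^ j) (monom 1 k)) (a - j + b))))"
      by (simp add: Lypow_E lmap_sum[OF lmap_Lxpow] lmap_smul[OF lmap_Lxpow])
    also have "\<dots> = bmul h (i, a) (k, b)"
      unfolding bmul_def Lxpow_pyA'
      by (auto simp: Let_def smul_sum2 intro!: sum.cong)
    finally show ?thesis by simp
  qed
  have "(Lx ^^ i) ((Ly h ^^ a) q) = lin (\<lambda>v. (Lx ^^ i) ((Ly h ^^ a) (Poly_Mapping.single v 1))) q"
    by (rule lmap_expand) (rule lmap_comp[OF lmap_Lxpow lmap_Lypow])
  also have "\<dots> = lin (\<lambda>v. bmul h (i, a) v) q"
    by (rule lin_cong) (auto simp: b single_E)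
  finally show ?thesis by simp
qed

lemma amul_char: "amul h p q = lin (\<lambda>u. (Lx ^^ fst u) ((Ly h ^^ snd u) q)) p"
  unfolding amul_def by (rule lin_cong) (auto simp: bmul_lin[symmetric])

lemma amul_E: "amul h (E i a) q = (Lx ^^ i) ((Ly h ^^ a) q)"
  by (simp add: amul_char E_def)

lemma lmap_amul1: "lmap (\<lambda>p. amul h p q)"
  by (simp add: amul_def lmap_lin)
lemma lmap_amul2: "lmap (\<lambda>q. amul h p q)"
proof (rule lmapI)
  fix q q' show "amul h p (q + q') = amul h p q + amul h p q'"
    unfolding amul_char lin_fadd[symmetric] by (simp add: lmap_add[OF lmap_Lxpow] lmap_add[OF lmap_Lypow])
next
  fix c q show "amul h p (smul c q) = smul c (amul h p q)"
    unfolding amul_char lin_fsmul[symmetric] by (simp add: lmap_smul[OF lmap_Lxpow] lmap_smul[OF lmap_Lypow])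
qed

lemma lmap_Mp: "lmap (Mp f)"
  by (rule lmapI) (simp_all add: Mp_def lmap_add[OF lmap_Lxpow] lmap_smul[OF lmap_Lxpow] pext_fadd pext_fsmul)
lemma plin_Mp: "plin (\<lambda>f. Mp f s)"
  by (simp add: Mp_def plin_pext)
lemma Mp_monom[simp]: "Mp (monom 1 n) s = (Lx ^^ n) s"
  by (simp add: Mp_def pext_monom)

lemma Mp_E: "Mp f (E k b) = pyA (f * monom 1 k) b"
proof (rule plin_eqI[where f = f])
  show "plin (\<lambda>f. Mp f (E k b))" by (rule plin_Mp)
  show "plin (\<lambda>f. pyA (f * monom 1 k) b)" by (rule plin_mult2[OF plin_pyA])
qed (simp add: mult_monom)

lemma Ly_Lxpow: "Ly h ((Lx ^^ i) s) = (Lx ^^ i) (Ly h s) + Mp (delta h (monom 1 i)) s"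
proof (rule lmap_eqI[where p = s])
  show "lmap (\<lambda>s. Ly h ((Lx ^^ i) s))" by (rule lmap_comp[OF lmap_Ly lmap_Lxpow])
  show "lmap (\<lambda>s. (Lx ^^ i) (Ly h s) + Mp (delta h (monom 1 i)) s)"
    by (rule lmap_plus[OF lmap_comp[OF lmap_Lxpow lmap_Ly] lmap_Mp])
  fix u :: "nat \<times> nat"
  obtain k b where u: "u = (k, b)" by fastforce
  have d: "delta h (monom 1 (i + k)) = monom 1 i * delta h (monom 1 k) + monom 1 k * delta h (monom 1 i)"
  proof -
    have "monom 1 (i + k) = monom 1 i * (monom 1 k :: 'a poly)" by (simp add: mult_monom)
    then show ?thesis by (simp add: delta_mult)
  qed
  show "Ly h ((Lx ^^ i) (Poly_Mapping.single u 1)) = (Lx ^^ i) (Ly h (Poly_Mapping.single u 1)) + Mp (delta h (monom 1 i)) (Poly_Mapping.single u 1)"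
    by (simp add: u single_E Ly_E d pyA_add lmap_add[OF lmap_Lxpow] Lxpow_pyA Mp_E mult.commute add_ac)
qed

lemma amul_Lx: "amul h (Lx q) r = Lx (amul h q r)"
proof (rule lmap_eqI[where p = q])
  show "lmap (\<lambda>q. amul h (Lx q) r)" by (rule lmap_comp[OF lmap_amul1 lmap_Lx])
  show "lmap (\<lambda>q. Lx (amul h q r))" by (rule lmap_comp[OF lmap_Lx lmap_amul1])
  fix u :: "nat \<times> nat"
  obtain i a where u: "u = (i, a)" by fastforce
  show "amul h (Lx (Poly_Mapping.single u 1)) r = Lx (amul h (Poly_Mapping.single u 1) r)"
    by (simp add: u single_E amul_E)
qed

lemma amul_pyA: "amul h (pyA f a) r = Mp f ((Ly h ^^ a) r)"
proof (rule plin_eqI[where f = f])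
  show "plin (\<lambda>f. amul h (pyA f a) r)" by (rule plin_lmap[OF lmap_amul1 plin_pyA])
  show "plin (\<lambda>f. Mp f ((Ly h ^^ a) r))" by (rule plin_Mp)
qed (simp add: amul_E)

lemma amul_Ly: "amul h (Ly h q) r = Ly h (amul h q r)"
proof (rule lmap_eqI[where p = q])
  show "lmap (\<lambda>q. amul h (Ly h q) r)" by (rule lmap_comp[OF lmap_amul1 lmap_Ly])
  show "lmap (\<lambda>q. Ly h (amul h q r))" by (rule lmap_comp[OF lmap_Ly lmap_amul1])
  fix u :: "nat \<times> nat"
  obtain i a where u: "u = (i, a)" by fastforce
  show "amul h (Ly h (Poly_Mapping.single u 1)) r = Ly h (amul h (Poly_Mapping.single u 1) r)"
    by (simp add: u single_E amul_E Ly_E lmap_add[OF lmap_amul1] amul_pyA Ly_Lxpow)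
qed

lemma amul_Lxpow: "amul h ((Lx ^^ n) q) r = (Lx ^^ n) (amul h q r)"
  by (induction n) (simp_all add: amul_Lx)
lemma amul_Lypow: "amul h ((Ly h ^^ n) q) r = (Ly h ^^ n) (amul h q r)"
  by (induction n) (simp_all add: amul_Ly)

lemma amul_assoc: "amul h (amul h p q) r = amul h p (amul h q r)"
proof (rule lmap_eqI[where p = p])
  show "lmap (\<lambda>p. amul h (amul h p q) r)" by (rule lmap_comp[OF lmap_amul1 lmap_amul1])
  show "lmap (\<lambda>p. amul h p (amul h q r))" by (rule lmap_amul1)
  fix u :: "nat \<times> nat"
  obtain i a where u: "u = (i, a)" by fastforce
  show "amul h (amul h (Poly_Mapping.single u 1) q) r = amul h (Poly_Mapping.single u 1) (amul h q r)"
    by (simp add: u single_E amul_E amul_Lxpow amul_Lypow)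
qed

lemma Lypow_E0m: "(Ly h ^^ a) (E 0 m) = E 0 (a + m)"
  by (induction a) (simp_all add: Ly_E)

lemma amul_E_E0: "amul h (E k l) (E 0 m) = E k (l + m)"
  by (simp add: amul_E Lypow_E0m)

lemma amul_one_left[simp]: "amul h (E 0 0) q = q"
  by (simp add: amul_E)

lemma amul_one_right[simp]: "amul h p (E 0 0) = p"
proof (rule lmap_eqI[where p = p])
  show "lmap (\<lambda>p. amul h p (E 0 0))" by (rule lmap_amul1)
  show "lmap (\<lambda>p. p)" by (rule lmap_id)
  fix u :: "nat \<times> nat"
  obtain i a where u: "u = (i, a)" by fastforce
  show "amul h (Poly_Mapping.single u 1) (E 0 0) = Poly_Mapping.single u 1"
    by (simp add: u single_E amul_E_E0)
qed

lemma amul_x_left: "amul h (E 1 0) q = Lx q"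
  by (simp add: amul_E)
lemma amul_y_left: "amul h (E 0 1) q = Ly h q"
  by (simp add: amul_E)
lemma amul_Ei0: "amul h (E i 0) (E k b) = E (i + k) b"
  by (simp add: amul_E)

lemma polyA_pyA: "polyA f = pyA f 0"
  by (simp add: polyA_def pyA_def pext_def)

lemma amul_polyA: "amul h (polyA f) q = Mp f q"
  by (simp add: polyA_pyA amul_pyA)

end



context fixes h :: "'a::field poly" begin

lemma tens3_single: "tens3 (Eb u) g (Eb w) = (Poly_Mapping.single (u, g, w) 1 :: ('a, 'g) tens)"
  by (simp add: tens3_def Eb_single)

lemma tens3_E: "tens3 (E i a) g (E k b) = (Poly_Mapping.single ((i, a), g, (k, b)) 1 :: ('a, 'g) tens)"
  using tens3_single[of "(i,a)" g "(k,b)"] by (simp add: Eb_def)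

lemma lmap_tens3_1: "lmap (\<lambda>a. tens3 a g (b :: 'a alg) :: ('a, 'g) tens)"
  unfolding tens3_def by (rule lmap_lin)

lemma lmap_tens3_2: "lmap (\<lambda>b. tens3 (a :: 'a alg) g b :: ('a, 'g) tens)"
proof (rule lmapI)
  fix p q :: "'a alg"
  show "tens3 a g (p + q) = tens3 a g p + tens3 a g q"
    unfolding tens3_def by (simp add: lin_add lin_fadd)
next
  fix c and p :: "'a alg"
  show "tens3 a g (smul c p) = smul c (tens3 a g p)"
    unfolding tens3_def by (simp add: lin_smul lin_fsmul)
qed

lemma tens3_add1: "tens3 (a + a') g b = tens3 a g b + tens3 a' g (b :: 'a alg)"
  by (rule lmap_add[OF lmap_tens3_1])
lemma tens3_add2: "tens3 a g (b + b') = tens3 a g b + tens3 a g (b' :: 'a alg)"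
  by (rule lmap_add[OF lmap_tens3_2])
lemma tens3_diff1: "tens3 (a - a') g b = tens3 a g b - tens3 a' g (b :: 'a alg)"
  by (rule lmap_diff[OF lmap_tens3_1])
lemma tens3_diff2: "tens3 a g (b - b') = tens3 a g b - tens3 a g (b' :: 'a alg)"
  by (rule lmap_diff[OF lmap_tens3_2])
lemma tens3_smul1: "tens3 (smul c a) g b = smul c (tens3 a g (b :: 'a alg))"
  by (rule lmap_smul[OF lmap_tens3_1])
lemma tens3_smul2: "tens3 a g (smul c b) = smul c (tens3 a g (b :: 'a alg))"
  by (rule lmap_smul[OF lmap_tens3_2])
lemma tens3_sum1: "tens3 (\<Sum>i\<in>I. f i) g b = (\<Sum>i\<in>I. tens3 (f i) g (b :: 'a alg))"
  by (rule lmap_sum[OF lmap_tens3_1])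
lemma tens3_sum2: "tens3 a g (\<Sum>i\<in>I. f i) = (\<Sum>i\<in>I. tens3 a g (f i :: 'a alg))"
  by (rule lmap_sum[OF lmap_tens3_2])
lemma tens3_zero1[simp]: "tens3 0 g b = (0 :: ('a, 'g) tens)"
  by (rule lmap_zero[OF lmap_tens3_1])
lemma tens3_zero2[simp]: "tens3 a g 0 = (0 :: ('a, 'g) tens)"
  by (rule lmap_zero[OF lmap_tens3_2])

definition bil :: "('a alg \<Rightarrow> 'g \<Rightarrow> 'a alg \<Rightarrow> ('k \<Rightarrow>\<^sub>0 'a)) \<Rightarrow> bool" where
  "bil \<Psi> \<longleftrightarrow> (\<forall>g c. lmap (\<lambda>a. \<Psi> a g c)) \<and> (\<forall>a g. lmap (\<lambda>c. \<Psi> a g c))"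

lemma lin_tens3:
  assumes "\<And>u g w. \<phi> (u, g, w) = \<Psi> (Eb u) g (Eb w)" "bil \<Psi>"
  shows "lin \<phi> (tens3 a g c) = \<Psi> a g c"
proof -
  have l1: "lmap (\<lambda>a. \<Psi> a g c)" for g c using assms(2) by (simp add: bil_def)
  have l2: "lmap (\<lambda>c. \<Psi> a g c)" for a g using assms(2) by (simp add: bil_def)
  have e2: "\<Psi> a g c = lin (\<lambda>w. \<Psi> a g (Poly_Mapping.single w 1)) c" for a g c
    by (rule lmap_expand[OF l2])
  have e1: "\<Psi> a g c = lin (\<lambda>w. \<Psi> (Poly_Mapping.single w 1) g c) a" for a g c
    by (rule lmap_expand[OF l1])
  have "lin \<phi> (tens3 a g c) = lin (\<lambda>u. lin (\<lambda>w. \<Psi> (Eb u) g (Eb w)) c) a"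
    unfolding tens3_def by (simp add: lin_lin assms(1))
  also have "\<dots> = lin (\<lambda>u. \<Psi> (Eb u) g c) a"
    by (rule lin_cong) (simp add: e2[of _ g c] Eb_single)
  also have "\<dots> = \<Psi> a g c"
    by (simp add: e1[of a g c] Eb_single)
  finally show ?thesis .
qed

lemma single_tens3: "Poly_Mapping.single (u, g, w) 1 = (tens3 (Eb u) g (Eb w) :: ('a, 'g) tens)"
  by (simp add: tens3_single)

lemma lmap_eqI3:
  fixes L M :: "('a, 'g) tens \<Rightarrow> ('k \<Rightarrow>\<^sub>0 'a)"
  assumes "lmap L" "lmap M" "\<And>u g w. L (tens3 (Eb u) g (Eb w)) = M (tens3 (Eb u) g (Eb w))"
  shows "L t = M t"
proof (rule lmap_eqI[OF assms(1,2)])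
  fix k :: "(nat \<times> nat) \<times> 'g \<times> (nat \<times> nat)"
  obtain u g w where "k = (u, g, w)" by (cases k) auto
  then show "L (Poly_Mapping.single k 1) = M (Poly_Mapping.single k 1)"
    using assms(3) by (simp add: single_tens3)
qed

lemma bil_lact: "bil (\<lambda>b g c. tens3 (amul h a b) g c :: ('a, 'g) tens)"
  unfolding bil_def
  by (auto intro: lmap_comp[OF lmap_tens3_1 lmap_amul2] lmap_tens3_2)

lemma lact_tens3: "lact h a (tens3 b g c) = (tens3 (amul h a b) g c :: ('a, 'g) tens)"
  unfolding lact_def by (rule lin_tens3[OF _ bil_lact]) simp

lemma bil_ract: "bil (\<lambda>b g c. tens3 b g (amul h c a) :: ('a, 'g) tens)"
  unfolding bil_def
  by (auto intro: lmap_comp[OF lmap_tens3_2 lmap_amul1] lmap_tens3_1)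

lemma ract_tens3: "ract h (tens3 b g c) a = (tens3 b g (amul h c a) :: ('a, 'g) tens)"
  unfolding ract_def by (rule lin_tens3[OF _ bil_ract]) simp

lemma lmap_lact: "lmap (\<lambda>t. lact h a t :: ('a, 'g) tens)"
  unfolding lact_def by (rule lmap_lin)
lemma lmap_ract: "lmap (\<lambda>t. ract h t b :: ('a, 'g) tens)"
  unfolding ract_def by (rule lmap_lin)

lemma lmap_lact1: "lmap (\<lambda>a. lact h a t :: ('a, 'g) tens)"
proof (rule lmapI)
  fix p q :: "'a alg"
  show "lact h (p + q) t = lact h p t + lact h q t"
    unfolding lact_def lin_fadd[symmetric]
    by (rule lin_cong) (auto simp: lmap_add[OF lmap_amul1] tens3_add1)
next
  fix c and p :: "'a alg"
  show "lact h (smul c p) t = smul c (lact h p t)"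
    unfolding lact_def lin_fsmul[symmetric]
    by (rule lin_cong) (auto simp: lmap_smul[OF lmap_amul1] tens3_smul1)
qed

lemma lmap_ract1: "lmap (\<lambda>b. ract h t b :: ('a, 'g) tens)"
proof (rule lmapI)
  fix p q :: "'a alg"
  show "ract h t (p + q) = ract h t p + ract h t q"
    unfolding ract_def lin_fadd[symmetric]
    by (rule lin_cong) (auto simp: lmap_add[OF lmap_amul2] tens3_add2)
next
  fix c and p :: "'a alg"
  show "ract h t (smul c p) = smul c (ract h t p)"
    unfolding ract_def lin_fsmul[symmetric]
    by (rule lin_cong) (auto simp: lmap_smul[OF lmap_amul2] tens3_smul2)
qed

lemma lact_lact: "lact h a (lact h b t) = (lact h (amul h a b) t :: ('a, 'g) tens)"
  by (rule lmap_eqI3[OF lmap_comp[OF lmap_lact lmap_lact] lmap_lact]) (simp add: lact_tens3 amul_assoc)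

lemma ract_ract: "ract h (ract h t a) b = (ract h t (amul h a b) :: ('a, 'g) tens)"
  by (rule lmap_eqI3[OF lmap_comp[OF lmap_ract lmap_ract] lmap_ract]) (simp add: ract_tens3 amul_assoc)

lemma lact_ract: "lact h a (ract h t b) = (ract h (lact h a t) b :: ('a, 'g) tens)"
  by (rule lmap_eqI3[OF lmap_comp[OF lmap_lact lmap_ract] lmap_comp[OF lmap_ract lmap_lact]])
     (simp add: ract_tens3 lact_tens3)

lemma lact_one[simp]: "lact h (E 0 0) t = (t :: ('a, 'g) tens)"
  by (rule lmap_eqI3[OF lmap_lact lmap_id]) (simp add: lact_tens3)

lemma ract_one[simp]: "ract h t (E 0 0) = (t :: ('a, 'g) tens)"
  by (rule lmap_eqI3[OF lmap_ract lmap_id]) (simp add: ract_tens3)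

lemma lin_ract_comm:
  fixes \<phi> :: "(nat \<times> nat) \<times> 'g \<times> (nat \<times> nat) \<Rightarrow> ('a, 'g2) tens"
  assumes "\<And>u g w. \<phi> (u, g, w) = \<Psi> (Eb u) g (Eb w)" "bil \<Psi>"
    "\<And>a g c b. \<Psi> a g (amul h c b) = ract h (\<Psi> a g c) b"
  shows "lin \<phi> (ract h t b) = ract h (lin \<phi> t) b"
proof (rule lmap_eqI3[where t = t])
  show "lmap (\<lambda>t. lin \<phi> (ract h t b))" by (rule lmap_comp[OF lmap_lin lmap_ract])
  show "lmap (\<lambda>t. ract h (lin \<phi> t) b)" by (rule lmap_comp[OF lmap_ract lmap_lin])
  fix u g w
  show "lin \<phi> (ract h (tens3 (Eb u) g (Eb w)) b) = ract h (lin \<phi> (tens3 (Eb u) g (Eb w))) b"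
    by (simp add: ract_tens3 lin_tens3[OF assms(1,2)] assms(3))
qed

lemma lin_lact_comm:
  fixes \<phi> :: "(nat \<times> nat) \<times> 'g \<times> (nat \<times> nat) \<Rightarrow> ('a, 'g2) tens"
  assumes "\<And>u g w. \<phi> (u, g, w) = \<Psi> (Eb u) g (Eb w)" "bil \<Psi>"
    "\<And>a g c b. \<Psi> (amul h b a) g c = lact h b (\<Psi> a g c)"
  shows "lin \<phi> (lact h b t) = lact h b (lin \<phi> t)"
proof (rule lmap_eqI3[where t = t])
  show "lmap (\<lambda>t. lin \<phi> (lact h b t))" by (rule lmap_comp[OF lmap_lin lmap_lact])
  show "lmap (\<lambda>t. lact h b (lin \<phi> t))" by (rule lmap_comp[OF lmap_lact lmap_lin])
  fix u g w
  show "lin \<phi> (lact h b (tens3 (Eb u) g (Eb w))) = lact h b (lin \<phi> (tens3 (Eb u) g (Eb w)))"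
    by (simp add: lact_tens3 lin_tens3[OF assms(1,2)] assms(3))
qed

end



definition G2 :: "'a::field poly \<Rightarrow> ('a, unit) tens \<Rightarrow> ('a, rgen) tens" where
  "G2 h t = lin (\<lambda>(u, _, w). ract h (Gmap (monom 1 (fst u))) (amul h (E 0 (snd u)) (Eb w))) t"

context fixes h :: "'a::field poly" begin

lemma lmap_lin_fun: "(\<And>u. lmap (F u)) \<Longrightarrow> lmap (\<lambda>c. lin (\<lambda>u. F u c) a)"
  by (rule lmapI) (simp_all add: lmap_add lmap_smul lin_fadd lin_fsmul)

lemma lin_lmap_comm: "lmap L \<Longrightarrow> lin (\<lambda>u. L (X u)) a = L (lin X a)"
  by (simp add: lin_def lmap_sum lmap_smul)

lemma lmap_mu: "lmap (mu h)" by (rule lmapI) (simp_all add: mu_def lin_add lin_smul)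
lemma lmap_d0: "lmap (d0 h)" by (rule lmapI) (simp_all add: d0_def lin_add lin_smul)
lemma lmap_d1: "lmap (d1 h)" by (rule lmapI) (simp_all add: d1_def lin_add lin_smul)
lemma lmap_s0: "lmap (s0 h)" by (rule lmapI) (simp_all add: s0_def lin_add lin_smul)
lemma lmap_s1: "lmap (s1 h)" by (rule lmapI) (simp_all add: s1_def lin_add lin_smul)
lemma lmap_G2: "lmap (G2 h)" by (rule lmapI) (simp_all add: G2_def lin_add lin_smul)
lemma lmap_sm1: "lmap (sm1 :: 'a alg \<Rightarrow> _)" unfolding sm1_def by (rule lmap_tens3_2)

lemma mu_tens3: "mu h (tens3 a g c) = amul h a c"
  unfolding mu_def
  by (rule lin_tens3[where \<Psi> = "\<lambda>a g c. amul h a c"]) (auto simp: bil_def lmap_amul1 lmap_amul2)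

lemma d0_tens3: "d0 h (tens3 a v c) = tens3 (amul h a (vel v)) () c - tens3 a () (amul h (vel v) c)"
  unfolding d0_def
  by (rule lin_tens3[where \<Psi> = "\<lambda>a v c. tens3 (amul h a (vel v)) () c - tens3 a () (amul h (vel v) c)"])
     (auto simp: bil_def intro!: lmap_minus lmap_comp[OF lmap_tens3_1 lmap_amul1] lmap_tens3_1
        lmap_comp[OF lmap_tens3_2 lmap_amul2] lmap_tens3_2)

lemma d1_tens3: "d1 h (tens3 a g c) = lact h a (ract h (d1gen h) c)"
  unfolding d1_def
  by (rule lin_tens3[where \<Psi> = "\<lambda>a g c. lact h a (ract h (d1gen h) c)"])
     (auto simp: bil_def intro!: lmap_lact1 lmap_comp[OF lmap_lact lmap_ract1])

definition "Ps0 a c = lin (\<lambda>u. ract h (s0gen (fst u) (snd u)) c) a"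

lemma bil_Ps0: "bil (\<lambda>a g c. Ps0 a c)"
  unfolding bil_def Ps0_def by (auto intro!: lmap_lin lmap_lin_fun lmap_ract1)

lemma s0_tens3: "s0 h (tens3 a g c) = Ps0 a c"
  unfolding s0_def
  by (rule lin_tens3[OF _ bil_Ps0]) (simp add: Ps0_def Eb_single)

lemma s0_tens3_E: "s0 h (tens3 (E k l) g c) = ract h (s0gen k l) c"
  by (simp add: s0_tens3 Ps0_def E_def)

definition "Ps1 a v c = (case v of Vy \<Rightarrow> 0 | Vx \<Rightarrow> lin (\<lambda>u. lact h (E (fst u) 0) (ract h (s1gen h (snd u)) c)) a)"

lemma bil_Ps1: "bil Ps1"
  unfolding bil_def
proof (intro conjI allI)
  fix g c show "lmap (\<lambda>a. Ps1 a g c)"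
    by (cases g) (simp_all add: Ps1_def lmap_lin lmap_const0)
next
  fix a g show "lmap (\<lambda>c. Ps1 a g c)"
    by (cases g) (simp_all add: Ps1_def lmap_const0 lmap_lin_fun lmap_comp[OF lmap_lact lmap_ract1])
qed

lemma s1_tens3: "s1 h (tens3 a v c) = Ps1 a v c"
  unfolding s1_def
  by (rule lin_tens3[OF _ bil_Ps1]) (simp add: Ps1_def Eb_single split: vgen.split)

lemma s1_tens3_Vy[simp]: "s1 h (tens3 a Vy c) = 0"
  by (simp add: s1_tens3 Ps1_def)

lemma s1_tens3_E: "s1 h (tens3 (E k l) Vx c) = lact h (E k 0) (ract h (s1gen h l) c)"
  by (simp add: s1_tens3 Ps1_def E_def)

definition "PG2 a c = lin (\<lambda>u. ract h (Gmap (monom 1 (fst u))) (amul h (E 0 (snd u)) c)) a"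

lemma bil_PG2: "bil (\<lambda>a g c. PG2 a c)"
  unfolding bil_def PG2_def by (auto intro!: lmap_lin lmap_lin_fun lmap_comp[OF lmap_ract1 lmap_amul2])

lemma G2_tens3: "G2 h (tens3 a g c) = PG2 a c"
  unfolding G2_def
  by (rule lin_tens3[OF _ bil_PG2]) (simp add: PG2_def Eb_single)

lemma G2_tens3_E: "G2 h (tens3 (E k l) g c) = ract h (Gmap (monom 1 k)) (amul h (E 0 l) c)"
  by (simp add: G2_tens3 PG2_def E_def)

end



context fixes h :: "'a::field poly" begin

abbreviation "X \<equiv> (E (Suc 0) 0 :: 'a alg)"
abbreviation "Y \<equiv> (E 0 (Suc 0) :: 'a alg)"
abbreviation "I \<equiv> (E 0 0 :: 'a alg)"

lemma vel_simps[simp]: "vel Vx = X" "vel Vy = Y" by (simp_all add: vel_def)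

lemma d0_lact: "d0 h (lact h b t) = lact h b (d0 h t)"
  by (rule lmap_eqI3[OF lmap_comp[OF lmap_d0 lmap_lact] lmap_comp[OF lmap_lact lmap_d0]])
     (simp add: lact_tens3 d0_tens3 lmap_diff[OF lmap_lact] amul_assoc)

lemma d0_ract: "d0 h (ract h t b) = ract h (d0 h t) b"
  by (rule lmap_eqI3[OF lmap_comp[OF lmap_d0 lmap_ract] lmap_comp[OF lmap_ract lmap_d0]])
     (simp add: ract_tens3 d0_tens3 lmap_diff[OF lmap_ract] amul_assoc)

lemma d1_lact: "d1 h (lact h b t) = lact h b (d1 h t)"
  by (rule lmap_eqI3[OF lmap_comp[OF lmap_d1 lmap_lact] lmap_comp[OF lmap_lact lmap_d1]])
     (simp add: lact_tens3 d1_tens3 lact_lact)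

lemma d1_ract: "d1 h (ract h t b) = ract h (d1 h t) b"
  by (rule lmap_eqI3[OF lmap_comp[OF lmap_d1 lmap_ract] lmap_comp[OF lmap_ract lmap_d1]])
     (simp add: ract_tens3 d1_tens3 ract_ract lact_ract)

lemma s0_ract: "s0 h (ract h t b) = ract h (s0 h t) b"
  by (rule lmap_eqI3[OF lmap_comp[OF lmap_s0 lmap_ract] lmap_comp[OF lmap_ract lmap_s0]])
     (simp add: ract_tens3 s0_tens3 Ps0_def Eb_single ract_ract)

lemma s1_ract: "s1 h (ract h t b) = ract h (s1 h t) b"
proof (rule lmap_eqI3[OF lmap_comp[OF lmap_s1 lmap_ract] lmap_comp[OF lmap_ract lmap_s1]])
  fix u g w
  show "s1 h (ract h (tens3 (Eb u) g (Eb w)) b) = ract h (s1 h (tens3 (Eb u) g (Eb w))) b"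
    by (cases g) (simp_all add: ract_tens3 s1_tens3 Ps1_def Eb_single ract_ract lact_ract lmap_zero[OF lmap_ract])
qed

lemma G2_ract: "G2 h (ract h t b) = ract h (G2 h t) b"
  by (rule lmap_eqI3[OF lmap_comp[OF lmap_G2 lmap_ract] lmap_comp[OF lmap_ract lmap_G2]])
     (simp add: ract_tens3 G2_tens3 PG2_def Eb_single ract_ract amul_assoc)

lemma sm1_amul: "sm1 (amul h a b) = ract h (sm1 a) b"
  by (simp add: sm1_def ract_tens3)

lemma mu_d0: "mu h (d0 h t) = 0"
  by (rule lmap_eqI3[OF lmap_comp[OF lmap_mu lmap_d0] lmap_const0])
     (simp add: d0_tens3 lmap_diff[OF lmap_mu] mu_tens3 amul_assoc)

lemma amul_Y_left: "amul h Y q = Ly h q"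
  by (simp add: amul_E)
lemma amul_X_left: "amul h X q = Lx q"
  by (simp add: amul_E)

lemma amul_E_Y: "amul h (E k l) Y = E k (Suc l)"
  by (simp add: amul_E_E0)
lemma amul_X_E: "amul h X (E k l) = E (Suc k) l"
  by (simp add: amul_E)
lemma amul_Y_E0: "amul h Y (E 0 m) = E 0 (Suc m)"
  by (simp add: amul_E_E0)
lemma amul_Ei0_X: "amul h (E i 0) X = E (Suc i) 0"
  by (simp add: amul_Ei0)

lemma d0_s0gen: "d0 h (s0gen k l) = tens3 (E k l) () I - tens3 I () (E k l)"
proof -
  define f where "f i = (tens3 (E i 0) () (E (k - i) l) :: ('a, unit) tens)" for i
  define g where "g j = (tens3 (E k j) () (E 0 (l - j)) :: ('a, unit) tens)" for j
  have 1: "d0 h (\<Sum>i<k. tens3 (E i 0) Vx (E (k - 1 - i) l)) = (\<Sum>i<k. f (Suc i) - f i)"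
    unfolding lmap_sum[OF lmap_d0]
    by (rule sum.cong) (auto simp: d0_tens3 amul_Ei0_X amul_X_E f_def Suc_diff_Suc)
  have 2: "d0 h (\<Sum>j<l. tens3 (E k j) Vy (E 0 (l - 1 - j))) = (\<Sum>j<l. g (Suc j) - g j)"
    unfolding lmap_sum[OF lmap_d0]
    by (rule sum.cong) (auto simp: d0_tens3 amul_E_Y amul_Y_E0 g_def Suc_diff_Suc)
  show ?thesis
    unfolding s0gen_def lmap_add[OF lmap_d0] 1 2 sum_lessThan_telescope
    by (simp add: f_def g_def)
qed

lemma part2: "sm1 (mu h t) + d0 h (s0 h t) = t"
proof (rule lmap_eqI3[where t = t])
  show "lmap (\<lambda>t. sm1 (mu h t) + d0 h (s0 h t))"
    by (intro lmap_plus lmap_comp[OF lmap_sm1 lmap_mu] lmap_comp[OF lmap_d0 lmap_s0])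
  show "lmap (\<lambda>t. t)" by (rule lmap_id)
  fix u w :: "nat \<times> nat" and g :: unit
  obtain k l where u: "u = (k, l)" by fastforce
  show "sm1 (mu h (tens3 (Eb u) g (Eb w))) + d0 h (s0 h (tens3 (Eb u) g (Eb w))) = tens3 (Eb u) g (Eb w)"
    by (simp add: u Eb_def mu_tens3 s0_tens3_E d0_ract d0_s0gen lmap_diff[OF lmap_ract] ract_tens3 sm1_def)
qed

lemma part1: "mu h (sm1 a) = a"
  by (simp add: sm1_def mu_tens3)

end



definition GG :: "nat \<Rightarrow> ('a::field, rgen) tens" where
  "GG k = (\<Sum>i<k. tens3 (E i 0) Rr (E (k - 1 - i) 0))"

context fixes h :: "'a::field poly" begin

lemma s0gen_Suc: "s0gen (Suc k) l = tens3 I Vx (E k l) + lact h X (s0gen k l)"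
  unfolding s0gen_def sum.lessThan_Suc_shift
  by (simp add: lmap_add[OF lmap_lact] lmap_sum[OF lmap_lact] lact_tens3 amul_X_E add_ac del: sum.lessThan_Suc)

lemma s0gen_ySuc: "s0gen k (Suc l) = ract h (s0gen k l) Y + tens3 (E k l) Vy I"
proof -
  have 1: "(\<Sum>i<k. tens3 (E i 0) Vx (E (k - 1 - i) (Suc l))) = ract h (\<Sum>i<k. tens3 (E i 0) Vx (E (k - 1 - i) l)) Y"
    by (simp add: lmap_sum[OF lmap_ract] ract_tens3 amul_E_Y)
  have 2: "(\<Sum>j<l. tens3 (E k j) Vy (E 0 (Suc l - 1 - j))) = ract h (\<Sum>j<l. tens3 (E k j) Vy (E 0 (l - 1 - j))) Y"
    unfolding lmap_sum[OF lmap_ract]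
    by (rule sum.cong) (auto simp: ract_tens3 amul_E_Y Suc_diff_Suc)
  show ?thesis
    unfolding s0gen_def
    by (simp only: sum.lessThan_Suc 1 2 lmap_add[OF lmap_ract]) (simp add: add_ac)
qed

lemma F1: "s0 h (lact h X u) = lact h X (s0 h u) + tens3 I Vx (mu h u)"
proof (rule lmap_eqI3[where t = u])
  show "lmap (\<lambda>u. s0 h (lact h X u))" by (rule lmap_comp[OF lmap_s0 lmap_lact])
  show "lmap (\<lambda>u. lact h X (s0 h u) + tens3 I Vx (mu h u))"
    by (intro lmap_plus lmap_comp[OF lmap_lact lmap_s0] lmap_comp[OF lmap_tens3_2 lmap_mu])
  fix u w :: "nat \<times> nat" and g :: unit
  obtain k l where u: "u = (k, l)" by fastforce
  show "s0 h (lact h X (tens3 (Eb u) g (Eb w))) = lact h X (s0 h (tens3 (Eb u) g (Eb w))) + tens3 I Vx (mu h (tens3 (Eb u) g (Eb w)))"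
    by (simp add: u Eb_def lact_tens3 amul_X_E s0_tens3_E s0gen_Suc lmap_add[OF lmap_ract] ract_tens3
        lact_ract[symmetric] mu_tens3 add_ac)
qed

lemma s1_lact_X: "s1 h (lact h X t) = lact h X (s1 h t)"
proof (rule lmap_eqI3[OF lmap_comp[OF lmap_s1 lmap_lact] lmap_comp[OF lmap_lact lmap_s1]])
  fix u w :: "nat \<times> nat" and g :: vgen
  obtain k l where u: "u = (k, l)" by fastforce
  show "s1 h (lact h X (tens3 (Eb u) g (Eb w))) = lact h X (s1 h (tens3 (Eb u) g (Eb w)))"
    by (cases g) (simp_all add: u Eb_def lact_tens3 amul_X_E s1_tens3_E lact_lact amul_Ei0 lmap_zero[OF lmap_lact])
qed

lemma Ry: "s0 h (tens3 (amul h p Y) () c) = s0 h (tens3 p () (amul h Y c)) + tens3 p Vy c"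
proof (rule lmap_eqI[where p = p])
  show "lmap (\<lambda>p. s0 h (tens3 (amul h p Y) () c))"
    by (intro lmap_comp[OF lmap_s0 lmap_comp[OF lmap_tens3_1 lmap_amul1]])
  show "lmap (\<lambda>p. s0 h (tens3 p () (amul h Y c)) + tens3 p Vy c)"
    by (intro lmap_plus lmap_comp[OF lmap_s0 lmap_tens3_1] lmap_tens3_1)
  fix u :: "nat \<times> nat"
  obtain k l where u: "u = (k, l)" by fastforce
  show "s0 h (tens3 (amul h (Poly_Mapping.single u 1) Y) () c) =
    s0 h (tens3 (Poly_Mapping.single u 1) () (amul h Y c)) + tens3 (Poly_Mapping.single u 1) Vy c"
    by (simp add: u single_E amul_E_Y s0_tens3_E s0gen_ySuc lmap_add[OF lmap_ract] ract_ract ract_tens3)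
qed

lemma Gmap_pext: "Gmap (f :: 'a poly) = pext GG f"
  by (simp add: Gmap_def pext_def GG_def)
lemma plin_Gmap: "plin (Gmap :: 'a poly \<Rightarrow> _)"
  unfolding Gmap_pext[abs_def] by (rule plin_pext)
lemma Gmap_monom: "Gmap (monom 1 k :: 'a poly) = GG k"
  by (simp add: Gmap_pext pext_monom)

lemma GG_Suc: "GG (Suc k) = tens3 I Rr (E k 0) + lact h X (GG k)"
  unfolding GG_def sum.lessThan_Suc_shift
  by (simp add: lmap_sum[OF lmap_lact] lact_tens3 amul_X_E del: sum.lessThan_Suc)

lemma GG_0[simp]: "GG 0 = 0" by (simp add: GG_def)

lemma GG_add: "GG (a + b) = lact h (E a 0) (GG b) + ract h (GG a) (E b 0)"
proof (induction a)
  case 0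
  then show ?case by (simp add: lmap_zero[OF lmap_ract])
next
  case (Suc a)
  have "GG (Suc a + b) = tens3 I Rr (E (a + b) 0) + lact h X (GG (a + b))"
    using GG_Suc[of "a + b"] by simp
  also have "\<dots> = lact h (E (Suc a) 0) (GG b) + ract h (GG (Suc a)) (E b 0)"
    unfolding Suc GG_Suc
    by (simp add: lmap_add[OF lmap_lact] lmap_add[OF lmap_ract] ract_tens3 amul_Ei0 lact_lact amul_X_E lact_ract add_ac)
  finally show ?case .
qed

lemma plin_polyA: "plin (polyA :: 'a poly \<Rightarrow> _)"
  unfolding polyA_pyA[abs_def] by (rule plin_pyA)

lemma polyA_monom[simp]: "polyA (monom 1 n :: 'a poly) = E n 0"
  by (simp add: polyA_pyA)

lemma Gmap_mult: "Gmap (f * g) = lact h (polyA f) (Gmap g) + ract h (Gmap f) (polyA g)"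
proof (rule plin_eqI[where f = f])
  show "plin (\<lambda>f::'a poly. Gmap (f * g))" by (rule plin_mult2[OF plin_Gmap])
  show "plin (\<lambda>f. lact h (polyA f) (Gmap g) + ract h (Gmap f) (polyA g))"
    by (intro plin_plus plin_lmap[OF lmap_lact1 plin_polyA] plin_lmap[OF lmap_ract plin_Gmap])
  fix a
  show "Gmap (monom 1 a * g) = lact h (polyA (monom 1 a)) (Gmap g) + ract h (Gmap (monom 1 a)) (polyA g)"
  proof (rule plin_eqI[where f = g])
    show "plin (\<lambda>g::'a poly. Gmap (monom 1 a * g))" by (rule plin_mult[OF plin_Gmap])
    show "plin (\<lambda>g. lact h (polyA (monom 1 a)) (Gmap g) + ract h (Gmap (monom 1 a)) (polyA g))"
      by (intro plin_plus plin_lmap[OF lmap_lact plin_Gmap] plin_lmap[OF lmap_ract1 plin_polyA])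
    fix b
    show "Gmap (monom 1 a * monom 1 b) = lact h (polyA (monom 1 a)) (Gmap (monom 1 b)) + ract h (Gmap (monom 1 a)) (polyA (monom 1 b))"
      by (simp add: mult_monom Gmap_monom GG_add)
  qed
qed

lemma amul_Y_X: "amul h Y X = E (Suc 0) (Suc 0) + polyA h"
proof -
  have "delta h (monom 1 (Suc 0)) = h" by (simp add: delta_def pderiv_monom)
  then show ?thesis by (simp add: amul_Y_left Ly_E polyA_pyA)
qed
lemma amul_X_Y: "amul h X Y = E (Suc 0) (Suc 0)"
  by (simp add: amul_E_E0)

lemma d0_s0: "d0 h (s0 h u) = u - sm1 (mu h u)"
  using part2[of h u] by (simp add: algebra_simps)

lemma d0_d1gen: "d0 h (d1gen h) = 0"
proof -
  let ?P = "polyA h"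
  have a: "d0 h (tens3 I Vy X) = tens3 Y () X - tens3 I () (amul h Y X)" by (simp add: d0_tens3)
  have b: "d0 h (tens3 Y Vx I) = tens3 (amul h Y X) () I - tens3 Y () X" by (simp add: d0_tens3)
  have c: "d0 h (tens3 I Vx Y) = tens3 X () Y - tens3 I () (amul h X Y)" by (simp add: d0_tens3)
  have d: "d0 h (tens3 X Vy I) = tens3 (amul h X Y) () I - tens3 X () Y" by (simp add: d0_tens3 amul_E_Y)
  have e: "d0 h (s0 h (tens3 ?P () I)) = tens3 ?P () I - tens3 I () ?P"
    by (simp add: d0_s0 mu_tens3 sm1_def)
  have "d0 h (d1gen h) = d0 h (tens3 I Vy X) + d0 h (tens3 Y Vx I) - d0 h (tens3 I Vx Y) - d0 h (tens3 X Vy I)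
     - d0 h (s0 h (tens3 ?P () I))"
    unfolding d1gen_def by (simp add: lmap_add[OF lmap_d0] lmap_diff[OF lmap_d0])
  also have "\<dots> = 0"
    unfolding a b c d e amul_Y_X amul_X_Y by (simp add: tens3_add1 tens3_add2 algebra_simps)
  finally show ?thesis .
qed

lemma d0_d1: "d0 h (d1 h t) = 0"
  by (rule lmap_eqI3[OF lmap_comp[OF lmap_d0 lmap_d1] lmap_const0])
     (simp add: d1_tens3 d0_lact d0_ract d0_d1gen lmap_zero[OF lmap_ract] lmap_zero[OF lmap_lact])

end



context fixes h :: "'a::field poly" begin

lemma s0gen_0_0: "s0gen 0 0 = 0"
  by (simp add: s0gen_def)

lemma Gmap_1[simp]: "Gmap (1 :: 'a poly) = 0"
  by (simp add: Gmap_def)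

lemma F1': "s0 h (tens3 (amul h X q) () c) = lact h X (s0 h (tens3 q () c)) + tens3 I Vx (amul h q c)"
  using F1[of h "tens3 q () c"] by (simp add: lact_tens3 mu_tens3)

lemma s0_poly_monom: "s0 h (tens3 (E (a + k) 0) () c) =
    lact h (E a 0) (s0 h (tens3 (E k 0) () c)) + s0 h (tens3 (E a 0) () (amul h (E k 0) c))"
proof (induction a)
  case 0
  then show ?case by (simp add: s0_tens3_E s0gen_0_0 lmap_zero[OF lmap_ract])
next
  case (Suc a)
  have "s0 h (tens3 (E (Suc a + k) 0) () c) = s0 h (tens3 (amul h X (E (a + k) 0)) () c)"
    by (simp add: amul_X_E)
  also have "\<dots> = lact h X (s0 h (tens3 (E (a + k) 0) () c)) + tens3 I Vx (amul h (E (a + k) 0) c)"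
    by (rule F1')
  also have "\<dots> = lact h (E (Suc a) 0) (s0 h (tens3 (E k 0) () c)) + s0 h (tens3 (E (Suc a) 0) () (amul h (E k 0) c))"
    unfolding Suc
    using F1'[of "E a 0" "amul h (E k 0) c"]
    by (simp add: lmap_add[OF lmap_lact] lact_lact amul_X_E amul_Ei0 amul_assoc[symmetric] add_ac)
  finally show ?case .
qed

lemma s0_poly: "s0 h (tens3 (amul h (polyA f) (E k 0)) () c) =
    lact h (polyA f) (s0 h (tens3 (E k 0) () c)) + s0 h (tens3 (polyA f) () (amul h (E k 0) c))"
proof (rule plin_eqI[where f = f])
  show "plin (\<lambda>f. s0 h (tens3 (amul h (polyA f) (E k 0)) () c))"
    by (intro plin_lmap[OF lmap_s0] plin_lmap[OF lmap_tens3_1] plin_lmap[OF lmap_amul1] plin_polyA)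
  show "plin (\<lambda>f. lact h (polyA f) (s0 h (tens3 (E k 0) () c)) + s0 h (tens3 (polyA f) () (amul h (E k 0) c)))"
    by (intro plin_plus plin_lmap[OF lmap_lact1 plin_polyA] plin_lmap[OF lmap_s0] plin_lmap[OF lmap_tens3_1] plin_polyA)
qed (simp add: amul_Ei0 s0_poly_monom)

lemma Ly_X: "Ly h (Lx q) = Lx (Ly h q) + amul h (polyA h) q"
proof -
  have "delta h (monom 1 (Suc 0)) = h" by (simp add: delta_def pderiv_monom)
  then show ?thesis using Ly_Lxpow[of h 1 q] by (simp add: amul_polyA)
qed

lemma G2_bal: "G2 h (tens3 (amul h (E k l) Y) () c) = G2 h (tens3 (E k l) () (amul h Y c))"
proof -
  have "amul h (E 0 (Suc l)) c = amul h (E 0 l) (amul h Y c)"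
    by (simp add: amul_assoc[symmetric] amul_E_Y)
  then show ?thesis by (simp add: amul_E_Y G2_tens3_E)
qed

lemma s0gen_0_1: "s0gen 0 (Suc 0) = tens3 I Vy I"
  by (simp add: s0gen_def)
lemma s0gen_1_0: "s0gen (Suc 0) 0 = tens3 I Vx I"
  by (simp add: s0gen_def)

lemma d1_I: "d1 h (tens3 I g b) = ract h (d1gen h) b"
  by (simp add: d1_tens3)

lemma ract_d1gen: "ract h (d1gen h) b = tens3 I Vy (amul h X b) + tens3 Y Vx b - tens3 I Vx (amul h Y b)
   - tens3 X Vy b - s0 h (tens3 (polyA h) () b)"
  unfolding d1gen_def
  by (simp add: lmap_add[OF lmap_ract] lmap_diff[OF lmap_ract] ract_tens3 s0_ract[symmetric])

lemma F2_basis: "s0 h (tens3 (amul h Y (E k l)) () c) = lact h Y (s0 h (tens3 (E k l) () c))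
   + tens3 I Vy (amul h (E k l) c) - d1 h (G2 h (tens3 (E k l) () c))"
proof (induction l arbitrary: c)
  case 0
  show ?case
  proof (induction k arbitrary: c)
    case 0
    show ?case
      by (simp add: amul_Y_E0 s0_tens3_E s0gen_0_1 s0gen_0_0 ract_tens3 lmap_zero[OF lmap_lact]
          G2_tens3_E lmap_zero[OF lmap_ract] lmap_zero[OF lmap_d1] Gmap_monom)
  next
    case (Suc k)
    define b where "b = amul h (E k 0) c"
    define S where "S = s0 h (tens3 (E k 0) () c)"
    define Gk where "Gk = G2 h (tens3 (E k 0) () c)"
    let ?P = "polyA h"
    have yx: "amul h Y (E (Suc k) 0) = amul h X (amul h Y (E k 0)) + amul h ?P (E k 0)"
      using Ly_X[of "E k 0"] by (simp add: amul_Y_left amul_X_left)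
    have "s0 h (tens3 (amul h Y (E (Suc k) 0)) () c) =
        s0 h (tens3 (amul h X (amul h Y (E k 0))) () c) + s0 h (tens3 (amul h ?P (E k 0)) () c)"
      by (simp add: yx tens3_add1 lmap_add[OF lmap_s0])
    also have "\<dots> = lact h X (lact h Y S + tens3 I Vy b - d1 h Gk) + tens3 I Vx (amul h Y b)
        + lact h ?P S + s0 h (tens3 ?P () b)"
      unfolding F1' Suc s0_poly S_def b_def Gk_def by (simp add: amul_assoc)
    also have "\<dots> = lact h X (lact h Y S) + lact h ?P S + tens3 I Vx (amul h Y b) + tens3 X Vy b
        + s0 h (tens3 ?P () b) - lact h X (d1 h Gk)"
      by (simp add: lmap_add[OF lmap_lact] lmap_diff[OF lmap_lact] lact_tens3 amul_X_left)
    also have "\<dots> = lact h Y (s0 h (tens3 (E (Suc k) 0) () c)) + tens3 I Vy (amul h (E (Suc k) 0) c)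
        - d1 h (G2 h (tens3 (E (Suc k) 0) () c))"
    proof -
      have s: "s0 h (tens3 (E (Suc k) 0) () c) = lact h X S + tens3 I Vx b"
        using F1'[of "E k 0" c] by (simp add: amul_X_E S_def b_def)
      have yx2: "amul h Y X = amul h X Y + ?P" by (simp add: amul_Y_X amul_X_Y)
      have l: "lact h Y (lact h X S) = lact h X (lact h Y S) + lact h ?P S"
        by (simp add: lact_lact yx2 lmap_add[OF lmap_lact1])
      have g: "G2 h (tens3 (E (Suc k) 0) () c) = tens3 I Rr b + lact h X Gk"
        by (simp add: G2_tens3_E Gmap_monom GG_Suc[where h=h] lmap_add[OF lmap_ract] ract_tens3 b_def Gk_def lact_ract)
      have e: "amul h (E (Suc k) 0) c = amul h X b"
        by (simp add: b_def amul_assoc[symmetric] amul_X_E)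
      show ?thesis
        unfolding s g e
        by (simp add: l lmap_add[OF lmap_lact] lact_tens3 lmap_add[OF lmap_d1] d1_I ract_d1gen d1_lact algebra_simps)
    qed
    finally show ?case .
  qed
next
  case (Suc l)
  have e: "E k (Suc l) = amul h (E k l) Y" by (simp add: amul_E_Y)
  have "s0 h (tens3 (amul h Y (E k (Suc l))) () c) = s0 h (tens3 (amul h (amul h Y (E k l)) Y) () c)"
    by (simp add: e amul_assoc)
  also have "\<dots> = s0 h (tens3 (amul h Y (E k l)) () (amul h Y c)) + tens3 (amul h Y (E k l)) Vy c"
    by (rule Ry)
  also have "\<dots> = lact h Y (s0 h (tens3 (E k (Suc l)) () c)) + tens3 I Vy (amul h (E k (Suc l)) c)
       - d1 h (G2 h (tens3 (E k (Suc l)) () c))"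
    unfolding Suc e Ry G2_bal
    by (simp add: amul_assoc lmap_add[OF lmap_lact] lact_tens3 algebra_simps)
  finally show ?case .
qed

lemma F2: "s0 h (lact h Y u) = lact h Y (s0 h u) + tens3 I Vy (mu h u) - d1 h (G2 h u)"
proof (rule lmap_eqI3[where t = u])
  show "lmap (\<lambda>u. s0 h (lact h Y u))" by (rule lmap_comp[OF lmap_s0 lmap_lact])
  show "lmap (\<lambda>u. lact h Y (s0 h u) + tens3 I Vy (mu h u) - d1 h (G2 h u))"
    by (intro lmap_minus lmap_plus lmap_comp[OF lmap_lact lmap_s0] lmap_comp[OF lmap_tens3_2 lmap_mu]
        lmap_comp[OF lmap_d1 lmap_G2])
  fix u w :: "nat \<times> nat" and g :: unit
  obtain k l where u: "u = (k, l)" by fastforce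
  show "s0 h (lact h Y (tens3 (Eb u) g (Eb w))) = lact h Y (s0 h (tens3 (Eb u) g (Eb w)))
     + tens3 I Vy (mu h (tens3 (Eb u) g (Eb w))) - d1 h (G2 h (tens3 (Eb u) g (Eb w)))"
    using F2_basis[of k l "Eb w"] by (simp add: u Eb_def lact_tens3 mu_tens3)
qed

end



context fixes h :: "'a::field poly" begin

lemma x_monom: "monom 1 (Suc 0) = ([:0, 1:] :: 'a poly)"
  by (simp add: monom_Suc monom_0)

lemma s1gen_Suc': "s1gen h (Suc l) = lact h Y (s1gen h l)
   + (\<Sum>j\<le>l. smul (of_nat (l choose j)) (ract h (Gmap ((delta h ^^ j) (monom 1 (Suc 0)))) (E 0 (l - j))))"
  by (simp add: x_monom)

lemma s1_pyA: "s1 h (tens3 (pyA f l) Vx c) = lact h (polyA f) (ract h (s1gen h l) c)"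
proof (rule plin_eqI[where f = f])
  show "plin (\<lambda>f. s1 h (tens3 (pyA f l) Vx c))"
    by (intro plin_lmap[OF lmap_s1] plin_lmap[OF lmap_tens3_1] plin_pyA)
  show "plin (\<lambda>f. lact h (polyA f) (ract h (s1gen h l) c))"
    by (intro plin_lmap[OF lmap_lact1 plin_polyA])
qed (simp add: s1_tens3_E)

lemma G2_pyA: "G2 h (tens3 (pyA g m) () c) = ract h (Gmap g) (amul h (E 0 m) c)"
proof (rule plin_eqI[where f = g])
  show "plin (\<lambda>g. G2 h (tens3 (pyA g m) () c))"
    by (intro plin_lmap[OF lmap_G2] plin_lmap[OF lmap_tens3_1] plin_pyA)
  show "plin (\<lambda>g::'a poly. ract h (Gmap g) (amul h (E 0 m) c))"
    by (intro plin_lmap[OF lmap_ract plin_Gmap])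
qed (simp add: G2_tens3_E)

lemma amul_pyA_c: "amul h (pyA g m) c = amul h (polyA g) (amul h (E 0 m) c)"
  by (simp add: amul_pyA amul_polyA amul_E)

lemma amul_E0_X: "amul h (E 0 l) X = (\<Sum>j\<le>l. smul (of_nat (l choose j)) (pyA ((delta h ^^ j) (monom 1 (Suc 0))) (l - j)))"
  by (simp add: amul_E Lypow_E)

lemma F4_Vx: "s1 h (lact h Y (tens3 (E k l) Vx c)) = lact h Y (s1 h (tens3 (E k l) Vx c)) + G2 h (d0 h (tens3 (E k l) Vx c))"
proof -
  define g where "g j = (delta h ^^ j) (monom 1 (Suc 0))" for j
  define C where "C j = (of_nat (l choose j) :: 'a)" for j
  define Z where "Z = ract h (s1gen h l) c"
  define T where "T = (\<Sum>j\<le>l. smul (C j) (ract h (Gmap (g j)) (E 0 (l - j))))"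
  let ?D = "polyA (delta h (monom 1 k))"
  have yE: "amul h Y (E k l) = E k (Suc l) + pyA (delta h (monom 1 k)) l"
    by (simp add: amul_Y_left Ly_E)
  have L: "s1 h (lact h Y (tens3 (E k l) Vx c)) = lact h (E k 0) (ract h (lact h Y (s1gen h l) + T) c) + lact h ?D Z"
    by (simp add: lact_tens3 yE tens3_add1 lmap_add[OF lmap_s1] s1_tens3_E s1_pyA s1gen_Suc' T_def C_def g_def Z_def x_monom)
  have yE0: "amul h Y (E k 0) = amul h (E k 0) Y + ?D"
    by (simp add: amul_Y_left Ly_E amul_E_Y polyA_pyA)
  have R1: "lact h Y (s1 h (tens3 (E k l) Vx c)) = lact h (E k 0) (ract h (lact h Y (s1gen h l)) c) + lact h ?D Z"
  proof -
    have "lact h Y (lact h (E k 0) Z) = lact h (amul h Y (E k 0)) Z" by (rule lact_lact)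
    also have "\<dots> = lact h (amul h (E k 0) Y) Z + lact h ?D Z" by (simp add: yE0 lmap_add[OF lmap_lact1])
    also have "lact h (amul h (E k 0) Y) Z = lact h (E k 0) (lact h Y Z)" by (rule lact_lact[symmetric])
    finally show ?thesis by (simp add: s1_tens3_E Z_def lact_ract)
  qed
  have EX: "amul h (E k l) X = (\<Sum>j\<le>l. smul (C j) (pyA (monom 1 k * g j) (l - j)))"
  proof -
    have "amul h (E k l) X = amul h (E k 0) (amul h (E 0 l) X)"
      by (simp add: amul_assoc[symmetric] amul_Ei0)
    also have "\<dots> = (\<Sum>j\<le>l. smul (C j) (pyA (monom 1 k * g j) (l - j)))"
      unfolding amul_E0_X
      by (simp add: lmap_sum[OF lmap_amul2] lmap_smul[OF lmap_amul2] lmap_sum[OF lmap_Lxpow]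
          lmap_smul[OF lmap_Lxpow] amul_E Lxpow_pyA C_def g_def)
    finally show ?thesis .
  qed
  have G1: "G2 h (tens3 (amul h (E k l) X) () c) = (\<Sum>j\<le>l. smul (C j)
       (lact h (E k 0) (ract h (Gmap (g j)) (amul h (E 0 (l - j)) c))
        + ract h (GG k) (amul h (polyA (g j)) (amul h (E 0 (l - j)) c))))"
    by (simp add: EX tens3_sum1 tens3_smul1 lmap_sum[OF lmap_G2] lmap_smul[OF lmap_G2] G2_pyA
        Gmap_mult[where h = h] Gmap_monom lmap_add[OF lmap_ract] ract_ract lact_ract)
  have G2': "G2 h (tens3 (E k l) () (amul h X c)) = (\<Sum>j\<le>l. smul (C j)
        (ract h (GG k) (amul h (polyA (g j)) (amul h (E 0 (l - j)) c))))"
  proof -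
    have "G2 h (tens3 (E k l) () (amul h X c)) = ract h (GG k) (amul h (amul h (E 0 l) X) c)"
      by (simp add: G2_tens3_E Gmap_monom amul_assoc)
    also have "\<dots> = (\<Sum>j\<le>l. smul (C j) (ract h (GG k) (amul h (polyA (g j)) (amul h (E 0 (l - j)) c))))"
      unfolding EX amul_E0_X
      by (simp add: lmap_sum[OF lmap_amul1] lmap_smul[OF lmap_amul1] lmap_sum[OF lmap_ract1]
          lmap_smul[OF lmap_ract1] amul_pyA_c C_def g_def)
    finally show ?thesis .
  qed
  have R2: "G2 h (d0 h (tens3 (E k l) Vx c)) = lact h (E k 0) (ract h T c)"
  proof -
    have "G2 h (d0 h (tens3 (E k l) Vx c)) = G2 h (tens3 (amul h (E k l) X) () c) - G2 h (tens3 (E k l) () (amul h X c))"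
      by (simp add: d0_tens3 lmap_diff[OF lmap_G2])
    also have "\<dots> = (\<Sum>j\<le>l. smul (C j) (lact h (E k 0) (ract h (Gmap (g j)) (amul h (E 0 (l - j)) c))))"
      unfolding G1 G2' by (simp add: smul_add2 sum.distrib)
    also have "\<dots> = lact h (E k 0) (ract h T c)"
      by (simp add: T_def lmap_sum[OF lmap_ract] lmap_smul[OF lmap_ract] lmap_sum[OF lmap_lact]
          lmap_smul[OF lmap_lact] ract_ract)
    finally show ?thesis .
  qed
  show ?thesis
    unfolding L R1 R2 by (simp add: lmap_add[OF lmap_ract] lmap_add[OF lmap_lact] add_ac)
qed

lemma F4: "s1 h (lact h Y t) = lact h Y (s1 h t) + G2 h (d0 h t)"
proof (rule lmap_eqI3[where t = t])
  show "lmap (\<lambda>t. s1 h (lact h Y t))" by (rule lmap_comp[OF lmap_s1 lmap_lact])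
  show "lmap (\<lambda>t. lact h Y (s1 h t) + G2 h (d0 h t))"
    by (intro lmap_plus lmap_comp[OF lmap_lact lmap_s1] lmap_comp[OF lmap_G2 lmap_d0])
  fix u w :: "nat \<times> nat" and g :: vgen
  obtain k l where u: "u = (k, l)" by fastforce
  show "s1 h (lact h Y (tens3 (Eb u) g (Eb w))) = lact h Y (s1 h (tens3 (Eb u) g (Eb w))) + G2 h (d0 h (tens3 (Eb u) g (Eb w)))"
  proof (cases g)
    case Vx
    then show ?thesis using F4_Vx[of k l "Eb w"] by (simp add: u Eb_def)
  next
    case Vy
    then show ?thesis
      by (simp add: u Eb_def lact_tens3 lmap_zero[OF lmap_lact] d0_tens3 lmap_diff[OF lmap_G2] G2_bal[symmetric] amul_E_Y)
  qed
qed

end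



context fixes h :: "'a::field poly" begin

lemma s1_s0gen: "s1 h (s0gen k l) = 0"
  by (simp add: s0gen_def lmap_add[OF lmap_s1] lmap_sum[OF lmap_s1] s1_tens3_E lmap_zero[OF lmap_ract]
      lmap_zero[OF lmap_lact])

lemma s1_s0: "s1 h (s0 h u) = 0"
proof (rule lmap_eqI3[OF lmap_comp[OF lmap_s1 lmap_s0] lmap_const0])
  fix u w :: "nat \<times> nat" and g :: unit
  obtain k l where u: "u = (k, l)" by fastforce
  show "s1 h (s0 h (tens3 (Eb u) g (Eb w))) = 0"
    by (simp add: u Eb_def s0_tens3_E s1_ract s1_s0gen lmap_zero[OF lmap_ract])
qed

lemma s1_d1gen: "s1 h (d1gen h) = tens3 I Rr I"
proof -
  have g1: "s1gen h (Suc 0) = tens3 I Rr I"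
  proof -
    have a: "Gmap ([:0, 1:] :: 'a poly) = tens3 I Rr I"
      unfolding x_monom[symmetric] Gmap_monom by (simp add: GG_def)
    have z: "lact h Y (0 :: ('a, rgen) tens) = 0" by (rule lmap_zero[OF lmap_lact])
    have "s1gen h (Suc 0) = lact h Y 0 + Gmap [:0, 1:]" by simp
    then have "s1gen h (Suc 0) = 0 + Gmap [:0, 1:]" by (simp only: z)
    then have "s1gen h (Suc 0) = Gmap [:0, 1:]" by simp
    then show "s1gen h (Suc 0) = tens3 I Rr I" by (simp only: a)
  qed
  have s0z: "s1 h (s0 h (tens3 (polyA h) () I)) = 0" by (rule s1_s0)
  show ?thesis
    unfolding d1gen_def
    by (simp add: lmap_add[OF lmap_s1] lmap_diff[OF lmap_s1] s1_tens3_E g1 s0z lmap_zero[OF lmap_ract]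
        s1gen.simps(1) del: s1gen.simps(2))
qed

lemma p4l: "s1 h (lact h (E 0 l) (d1gen h)) = tens3 (E 0 l) Rr I"
proof (induction l)
  case 0
  then show ?case by (simp add: s1_d1gen)
next
  case (Suc l)
  have "lact h (E 0 (Suc l)) (d1gen h) = lact h Y (lact h (E 0 l) (d1gen h))"
    by (simp add: lact_lact amul_Y_E0)
  then show ?case
    by (simp add: F4 Suc d0_lact d0_d1gen lmap_zero[OF lmap_lact] lmap_zero[OF lmap_G2] lact_tens3 amul_Y_E0)
qed

lemma p4a: "s1 h (lact h (E k l) (d1gen h)) = tens3 (E k l) Rr I"
proof (induction k)
  case 0
  then show ?case by (rule p4l)
next
  case (Suc k)
  have "lact h (E (Suc k) l) (d1gen h) = lact h X (lact h (E k l) (d1gen h))"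
    by (simp add: lact_lact amul_X_E)
  then show ?case
    by (simp add: s1_lact_X Suc lact_tens3 amul_X_E)
qed

lemma part4: "s1 h (d1 h t) = t"
proof (rule lmap_eqI3[OF lmap_comp[OF lmap_s1 lmap_d1] lmap_id])
  fix u w :: "nat \<times> nat" and g :: rgen
  obtain k l where u: "u = (k, l)" by fastforce
  have g: "g = Rr" by (cases g) simp
  show "s1 h (d1 h (tens3 (Eb u) g (Eb w))) = tens3 (Eb u) g (Eb w)"
    by (simp add: u g Eb_def d1_tens3 lact_ract s1_ract p4a ract_tens3)
qed

lemma P_X: "s0 h (d0 h (lact h X t)) + d1 h (s1 h (lact h X t)) = lact h X (s0 h (d0 h t) + d1 h (s1 h t))"
  by (simp add: d0_lact F1 mu_d0 s1_lact_X d1_lact lmap_add[OF lmap_lact])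

lemma P_Y: "s0 h (d0 h (lact h Y t)) + d1 h (s1 h (lact h Y t)) = lact h Y (s0 h (d0 h t) + d1 h (s1 h t))"
  by (simp add: d0_lact F2 mu_d0 F4 d1_lact lmap_add[OF lmap_lact] lmap_add[OF lmap_d1])

lemma P_base: "s0 h (d0 h (tens3 I v c)) + d1 h (s1 h (tens3 I v c)) = tens3 I v c"
proof (cases v)
  case Vx
  then show ?thesis
    by (simp add: d0_tens3 lmap_diff[OF lmap_s0] s0_tens3_E s0gen_1_0 s0gen_0_0 ract_tens3
        lmap_zero[OF lmap_ract] s1_tens3_E lmap_zero[OF lmap_lact] lmap_zero[OF lmap_d1])
next
  case Vy
  then show ?thesis
    by (simp add: d0_tens3 lmap_diff[OF lmap_s0] s0_tens3_E s0gen_0_1 s0gen_0_0 ract_tens3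
        lmap_zero[OF lmap_ract] lmap_zero[OF lmap_d1])
qed

lemma P_l: "s0 h (d0 h (tens3 (E 0 l) v c)) + d1 h (s1 h (tens3 (E 0 l) v c)) = tens3 (E 0 l) v c"
proof (induction l)
  case 0
  then show ?case by (rule P_base)
next
  case (Suc l)
  have "tens3 (E 0 (Suc l)) v c = lact h Y (tens3 (E 0 l) v c)"
    by (simp add: lact_tens3 amul_Y_E0)
  then show ?case by (simp add: P_Y Suc)
qed

lemma P_kl: "s0 h (d0 h (tens3 (E k l) v c)) + d1 h (s1 h (tens3 (E k l) v c)) = tens3 (E k l) v c"
proof (induction k)
  case 0
  then show ?case by (rule P_l)
next
  case (Suc k)
  have "tens3 (E (Suc k) l) v c = lact h X (tens3 (E k l) v c)"
    by (simp add: lact_tens3 amul_X_E)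
  then show ?case by (simp add: P_X Suc)
qed

lemma part3: "s0 h (d0 h t) + d1 h (s1 h t) = t"
proof (rule lmap_eqI3[where t = t])
  show "lmap (\<lambda>t. s0 h (d0 h t) + d1 h (s1 h t))"
    by (intro lmap_plus lmap_comp[OF lmap_s0 lmap_d0] lmap_comp[OF lmap_d1 lmap_s1])
  show "lmap (\<lambda>t. t)" by (rule lmap_id)
  fix u w :: "nat \<times> nat" and g :: vgen
  obtain k l where u: "u = (k, l)" by fastforce
  show "s0 h (d0 h (tens3 (Eb u) g (Eb w))) + d1 h (s1 h (tens3 (Eb u) g (Eb w))) = tens3 (Eb u) g (Eb w)"
    using P_kl[of k l g "Eb w"] by (simp add: u Eb_def)
qed

end

theorem theorem4p7:
  fixes h :: "'a::field poly"
  assumes "h \<noteq> 0"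
  shows "(\<forall>a :: 'a alg. mu h (sm1 a) = a)
       \<and> (\<forall>t :: ('a, unit) tens. sm1 (mu h t) + d0 h (s0 h t) = t)
       \<and> (\<forall>t :: ('a, vgen) tens. s0 h (d0 h t) + d1 h (s1 h t) = t)
       \<and> (\<forall>t :: ('a, rgen) tens. s1 h (d1 h t) = t)"
  using part1[of h] part2[of h] part3[of h] part4[of h] by blast



end
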